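(* For every $\epsilon>0$ the following two limits hold: $$\lim_{N\to\infty}\Pr\left(\frac1{N^2}\left|\log\frac{P_{Y^{N\times N}}(Y^{N\times N})}{P_{Y^{N\times N}|X_{sf},\Phi}(Y^{N\times N}|X_{sf},\Phi)}\right|<\frac\epsilon2\right)=1,$$ $$\lim_{N\to\infty}\Pr\left(\frac1{N^2}\left|\log\frac{P_{Y^{N\times N}|X^{N\times N}}(Y^{N\times N}|X^{N\times N})}{P_{Y^{N\times N}|X^{N\times N},\Phi}(Y^{N\times N}|X^{N\times N},\Phi)}\right|<\frac\epsilon2\right)=1.$$
   Context: ReRAM channel model. Fix resistances $0<R_1<R_0$ and $R_s>0$, and for $x,v\in\{0,1\}$ define $R_x(v)=\bigl(1/R_x+(1-x)v/R_s\bigr)^{-1}$. Fix $\sigma>0$, an integer $K\ge0$, $0<q<1$, and a probability vector $(p_0,\dots,p_K)$. For each $N$, the input $X^{N\times N}$ has i.i.d. Bernoulli$(q)$ entries. The SF pattern $\Phi\subseteq\{1,\dots,N\}^2$ is random with $\Pr(\Phi=\varphi)=p_k/\binom{N^2}{k}$ when $|\varphi|=k\le K$. The noise $Z_{m,n}\sim\mathcal N(0,\sigma^2)$ is i.i.d. The three objects $X$, $\Phi$ and $Z$ are mutually independent. The output is $$Y_{m,n}=R_{X_{m,n}}\Bigl(\bigvee_{(i,j)\in\Phi}X_{m,j}X_{i,j}X_{i,n}\Bigr)+Z_{m,n}.$$ For $(i,j)\in\Phi$, row $i$ is called an SF row and column $j$ an SF column. $X_{sf}$ denotes the collection of entries of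 $X^{N\times N}$ lying in SF rows or SF columns. The notation $P_{Y|X_{sf},\Phi}$, $P_{Y|X}$, $P_{Y|X,\Phi}$ and $P_Y$ denotes the corresponding (conditional) densities of $Y^{N\times N}$, and $\log$ is the natural logarithm. *)

theory Defs
  imports "HOL-Probability.Probability"
begin

text \<open>Channel parameters: R0 R1 Rs (resistances), sigma (noise std), q (Bernoulli
  parameter), K (max number of SF cells), p (probability vector p 0 .. p K).\<close>

definition grid :: "nat \<Rightarrow> (nat \<times> nat) set" where
  "grid N = {1..N} \<times> {1..N}"

definition inputs :: "nat \<Rightarrow> ((nat \<times> nat) \<Rightarrow> bool) set" where
  "inputs N = PiE (grid N) (\<lambda>_. UNIV)"

definition patterns :: "nat \<Rightarrow> nat \<Rightarrow> (nat \<times> nat) set set" where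
  "patterns K N = {\<phi>. \<phi> \<subseteq> grid N \<and> card \<phi> \<le> K}"

definition bern :: "real \<Rightarrow> bool \<Rightarrow> real" where
  "bern q b = (if b then q else 1 - q)"

definition prX :: "real \<Rightarrow> nat \<Rightarrow> ((nat \<times> nat) \<Rightarrow> bool) \<Rightarrow> real" where
  "prX q N x = (\<Prod>c\<in>grid N. bern q (x c))"

definition prPhi :: "(nat \<Rightarrow> real) \<Rightarrow> nat \<Rightarrow> (nat \<times> nat) set \<Rightarrow> real" where
  "prPhi p N \<phi> = p (card \<phi>) / real ((N^2) choose (card \<phi>))"

definition sneak :: "(nat \<times> nat) set \<Rightarrow> ((nat \<times> nat) \<Rightarrow> bool) \<Rightarrow> nat \<times> nat \<Rightarrow> bool" where
  "sneak \<phi> x c = (\<exists>(i,j)\<in>\<phi>. x (fst c, j) \<and> x (i, j) \<and> x (i, snd c))"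

definition Rcell :: "real \<Rightarrow> real \<Rightarrow> real \<Rightarrow> bool \<Rightarrow> bool \<Rightarrow> real" where
  "Rcell R0 R1 Rs b v =
     inverse (inverse (if b then R1 else R0) + (if \<not> b \<and> v then inverse Rs else 0))"

definition cellmean :: "real \<Rightarrow> real \<Rightarrow> real \<Rightarrow> (nat \<times> nat) set \<Rightarrow> ((nat \<times> nat) \<Rightarrow> bool)
    \<Rightarrow> nat \<times> nat \<Rightarrow> real" where
  "cellmean R0 R1 Rs \<phi> x c = Rcell R0 R1 Rs (x c) (sneak \<phi> x c)"

definition dYXPhi :: "real \<Rightarrow> real \<Rightarrow> real \<Rightarrow> real \<Rightarrow> nat \<Rightarrow> ((nat \<times> nat) \<Rightarrow> real)
    \<Rightarrow> ((nat \<times> nat) \<Rightarrow> bool) \<Rightarrow> (nat \<times> nat) set \<Rightarrow> real" where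
  "dYXPhi R0 R1 Rs \<sigma> N y x \<phi> =
     (\<Prod>c\<in>grid N. normal_density (cellmean R0 R1 Rs \<phi> x c) \<sigma> (y c))"

definition dYX :: "real \<Rightarrow> real \<Rightarrow> real \<Rightarrow> real \<Rightarrow> nat \<Rightarrow> (nat \<Rightarrow> real) \<Rightarrow> nat
    \<Rightarrow> ((nat \<times> nat) \<Rightarrow> real) \<Rightarrow> ((nat \<times> nat) \<Rightarrow> bool) \<Rightarrow> real" where
  "dYX R0 R1 Rs \<sigma> K p N y x =
     (\<Sum>\<phi>\<in>patterns K N. prPhi p N \<phi> * dYXPhi R0 R1 Rs \<sigma> N y x \<phi>)"

definition dY :: "real \<Rightarrow> real \<Rightarrow> real \<Rightarrow> real \<Rightarrow> real \<Rightarrow> nat \<Rightarrow> (nat \<Rightarrow> real) \<Rightarrow> nat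
    \<Rightarrow> ((nat \<times> nat) \<Rightarrow> real) \<Rightarrow> real" where
  "dY R0 R1 Rs \<sigma> q K p N y =
     (\<Sum>x\<in>inputs N. prX q N x * dYX R0 R1 Rs \<sigma> K p N y x)"

definition sfcells :: "nat \<Rightarrow> (nat \<times> nat) set \<Rightarrow> (nat \<times> nat) set" where
  "sfcells N \<phi> = {c\<in>grid N. \<exists>(i,j)\<in>\<phi>. fst c = i \<or> snd c = j}"

text \<open>P_{Y|X_sf,Phi}(y | x_sf, phi): average of P_{Y|X,Phi} over the entries of X
  outside SF rows/columns, which given (X_sf, Phi) are still i.i.d. Bernoulli(q).\<close>
definition dYXsfPhi :: "real \<Rightarrow> real \<Rightarrow> real \<Rightarrow> real \<Rightarrow> real \<Rightarrow> nat
    \<Rightarrow> ((nat \<times> nat) \<Rightarrow> real) \<Rightarrow> ((nat \<times> nat) \<Rightarrow> bool) \<Rightarrow> (nat \<times> nat) set \<Rightarrow> real" where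
  "dYXsfPhi R0 R1 Rs \<sigma> q N y x \<phi> =
     (\<Sum>x'\<in>{x'\<in>inputs N. \<forall>c\<in>sfcells N \<phi>. x' c = x c}.
        (\<Prod>c\<in>grid N - sfcells N \<phi>. bern q (x' c)) * dYXPhi R0 R1 Rs \<sigma> N y x' \<phi>)"

definition noise :: "real \<Rightarrow> nat \<Rightarrow> ((nat \<times> nat) \<Rightarrow> real) measure" where
  "noise \<sigma> N = PiM (grid N) (\<lambda>_. density lborel (normal_density 0 \<sigma>))"

text \<open>Pr(E(X, Phi, Y)) for the joint law of (X, Phi, Z), with Y = R_X(sneak) + Z.\<close>
definition chanprob :: "real \<Rightarrow> real \<Rightarrow> real \<Rightarrow> real \<Rightarrow> real \<Rightarrow> nat \<Rightarrow> (nat \<Rightarrow> real) \<Rightarrow> nat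
    \<Rightarrow> (((nat \<times> nat) \<Rightarrow> bool) \<Rightarrow> (nat \<times> nat) set \<Rightarrow> ((nat \<times> nat) \<Rightarrow> real) \<Rightarrow> bool) \<Rightarrow> real" where
  "chanprob R0 R1 Rs \<sigma> q K p N E =
     (\<Sum>x\<in>inputs N. \<Sum>\<phi>\<in>patterns K N. prX q N x * prPhi p N \<phi> *
        measure (noise \<sigma> N)
          {z \<in> space (noise \<sigma> N). E x \<phi> (\<lambda>c. cellmean R0 R1 Rs \<phi> x c + z c)})"

end

theory Submission imports Defs begin

lemma shift1:
  assumes B: "B \<in> sets borel"
  shows "emeasure (density lborel (normal_density 0 \<sigma>)) {t. a + t \<in> B}
       = emeasure (density lborel (normal_density a \<sigma>)) B"
proof -
  have mB[measurable]: "B \<in> sets borel" by fact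
  have "emeasure (density lborel (normal_density a \<sigma>)) B
      = (\<integral>\<^sup>+ x. ennreal (normal_density a \<sigma> x) * indicator B x \<partial>lborel)"
    by (simp add: emeasure_density)
  also have "\<dots> = (\<integral>\<^sup>+ x. ennreal (normal_density a \<sigma> (a + 1 * x)) * indicator B (a + 1 * x) \<partial>lborel)"
    by (subst nn_integral_real_affine[where c=1 and t=a]) auto
  also have "\<dots> = (\<integral>\<^sup>+ x. ennreal (normal_density 0 \<sigma> x) * indicator {t. a + t \<in> B} x \<partial>lborel)"
    by (intro nn_integral_cong) (simp add: normal_density_def indicator_def)
  also have "\<dots> = emeasure (density lborel (normal_density 0 \<sigma>)) {t. a + t \<in> B}"
    by (subst emeasure_density) auto
  finally show ?thesis by simp
qed

lemma psf_nd: assumes "0 < \<sigma>" shows "product_sigma_finite (\<lambda>c. density lborel (normal_density (a c) \<sigma>))"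
  unfolding product_sigma_finite_def
  using prob_space_normal_density[OF assms] prob_space_imp_sigma_finite by blast

lemma psf_lborel: "product_sigma_finite (\<lambda>c. lborel)"
  unfolding product_sigma_finite_def using sigma_finite_lborel by blast

lemma sets_PiM_dens: "sets (PiM I (\<lambda>c. density lborel (f c))) = sets (PiM I (\<lambda>_. lborel))"
  by (rule sets_PiM_cong) simp_all

lemma shiftPiM:
  assumes I: "finite I" and sig: "0 < \<sigma>"
  shows "distr (PiM I (\<lambda>_. density lborel (normal_density 0 \<sigma>))) (PiM I (\<lambda>_. lborel))
           (\<lambda>z. \<lambda>c\<in>I. a c + z c) = PiM I (\<lambda>c. density lborel (normal_density (a c) \<sigma>))"
proof (rule product_sigma_finite.PiM_eqI[OF psf_nd[OF sig] I])
  show "sets (distr (PiM I (\<lambda>_. density lborel (normal_density 0 \<sigma>))) (PiM I (\<lambda>_. lborel))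
           (\<lambda>z. \<lambda>c\<in>I. a c + z c)) = sets (PiM I (\<lambda>c. density lborel (normal_density (a c) \<sigma>)))"
    unfolding sets_distr by (rule sets_PiM_dens[symmetric])
  fix A assume A: "\<And>i. i \<in> I \<Longrightarrow> A i \<in> sets (density lborel (normal_density (a i) \<sigma>))"
  have mm: "(\<lambda>z. \<lambda>c\<in>I. a c + z c) \<in> measurable (PiM I (\<lambda>_. density lborel (normal_density 0 \<sigma>))) (PiM I (\<lambda>_. lborel))"
  proof -
    have "(\<lambda>z. \<lambda>c\<in>I. a c + z c) \<in> measurable (PiM I (\<lambda>_. lborel)) (PiM I (\<lambda>_. lborel))"
      by (rule measurable_restrict) (auto intro!: borel_measurable_add measurable_component_singleton)
    moreover have "measurable (PiM I (\<lambda>_. density lborel (normal_density 0 \<sigma>))) (PiM I (\<lambda>_. lborel))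
        = measurable (PiM I (\<lambda>_. lborel)) (PiM I (\<lambda>_. lborel))"
      by (intro measurable_cong_sets sets_PiM_dens refl)
    ultimately show ?thesis by simp
  qed
  have pre: "(\<lambda>z. \<lambda>c\<in>I. a c + z c) -` PiE I A \<inter> space (PiM I (\<lambda>_. density lborel (normal_density 0 \<sigma>)))
      = PiE I (\<lambda>c. {t. a c + t \<in> A c})"
    by (auto simp: space_PiM PiE_iff)
  have "emeasure (distr (PiM I (\<lambda>_. density lborel (normal_density 0 \<sigma>))) (PiM I (\<lambda>_. lborel))
           (\<lambda>z. \<lambda>c\<in>I. a c + z c)) (PiE I A)
     = emeasure (PiM I (\<lambda>_. density lborel (normal_density 0 \<sigma>))) (PiE I (\<lambda>c. {t. a c + t \<in> A c}))"
  proof (subst emeasure_distr[OF mm])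
    show "PiE I A \<in> sets (PiM I (\<lambda>_. lborel))"
      using A by (intro sets_PiM_I_finite I) auto
  qed (simp add: pre)
  also have "\<dots> = (\<Prod>c\<in>I. emeasure (density lborel (normal_density 0 \<sigma>)) {t. a c + t \<in> A c})"
  proof (rule product_sigma_finite.emeasure_PiM[OF psf_nd[OF sig, of "\<lambda>_. 0"] I])
    fix c assume "c \<in> I"
    then have "A c \<in> sets borel" using A by auto
    then show "{t. a c + t \<in> A c} \<in> sets (density lborel (normal_density 0 \<sigma>))"
      by (auto intro: measurable_sets_borel[of "\<lambda>t. a c + t"])
  qed
  also have "\<dots> = (\<Prod>c\<in>I. emeasure (density lborel (normal_density (a c) \<sigma>)) (A c))"
    using A by (intro prod.cong refl shift1) auto
  finally show "emeasure (distr (PiM I (\<lambda>_. density lborel (normal_density 0 \<sigma>))) (PiM I (\<lambda>_. lborel))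
           (\<lambda>z. \<lambda>c\<in>I. a c + z c)) (PiE I A) = (\<Prod>c\<in>I. emeasure (density lborel (normal_density (a c) \<sigma>)) (A c))" .
qed

lemma meas_comp:
  assumes "c \<in> I"
  shows "(\<lambda>y. y c) \<in> borel_measurable (PiM I (\<lambda>_. (lborel :: real measure)))"
  using measurable_component_singleton[OF assms, of "\<lambda>_. (lborel :: real measure)"] by simp

lemma meas_dens:
  "(\<lambda>y. \<Prod>c\<in>I. normal_density (a c) \<sigma> ((y :: _ \<Rightarrow> real) c)) \<in> borel_measurable (PiM I (\<lambda>_. lborel))"
  by (rule borel_measurable_prod)
     (rule measurable_compose[OF meas_comp borel_measurable_normal_density])

lemma densPiM:
  assumes I: "finite I" and sig: "0 < \<sigma>"
  shows "PiM I (\<lambda>c. density lborel (normal_density (a c) \<sigma>))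
       = density (PiM I (\<lambda>_. (lborel::real measure))) (\<lambda>y::_\<Rightarrow>real. ennreal (\<Prod>c\<in>I. normal_density (a c) \<sigma> (y c)))"
proof -
  have "density (PiM I (\<lambda>_. (lborel::real measure))) (\<lambda>y. ennreal (\<Prod>c\<in>I. normal_density (a c) \<sigma> (y c)))
      = PiM I (\<lambda>c. density lborel (normal_density (a c) \<sigma>))"
  proof (rule product_sigma_finite.PiM_eqI[OF psf_nd[OF sig] I])
    show "sets (density (PiM I (\<lambda>_. (lborel::real measure))) (\<lambda>y. ennreal (\<Prod>c\<in>I. normal_density (a c) \<sigma> (y c))))
       = sets (PiM I (\<lambda>c. density lborel (normal_density (a c) \<sigma>)))"
      unfolding sets_density by (rule sets_PiM_dens[symmetric])
    fix A assume A: "\<And>i. i \<in> I \<Longrightarrow> A i \<in> sets (density lborel (normal_density (a i) \<sigma>))"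
    have Ab: "\<And>i. i \<in> I \<Longrightarrow> A i \<in> sets borel" using A by simp
    have PE: "PiE I A \<in> sets (PiM I (\<lambda>_. (lborel::real measure)))"
      using Ab by (intro sets_PiM_I_finite I) auto
    have "emeasure (density (PiM I (\<lambda>_. (lborel::real measure))) (\<lambda>y. ennreal (\<Prod>c\<in>I. normal_density (a c) \<sigma> (y c)))) (PiE I A)
       = (\<integral>\<^sup>+ y. ennreal (\<Prod>c\<in>I. normal_density (a c) \<sigma> (y c)) * indicator (PiE I A) y \<partial>PiM I (\<lambda>_. (lborel::real measure)))"
      by (rule emeasure_density[OF _ PE]) (rule measurable_compose[OF meas_dens]; simp)
    also have "\<dots> = (\<integral>\<^sup>+ y. (\<Prod>c\<in>I. ennreal (normal_density (a c) \<sigma> (y c)) * indicator (A c) (y c)) \<partial>PiM I (\<lambda>_. (lborel::real measure)))"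
    proof (rule nn_integral_cong)
      fix y assume y: "y \<in> space (PiM I (\<lambda>_. (lborel::real measure)))"
      have "ennreal (\<Prod>c\<in>I. normal_density (a c) \<sigma> (y c)) = (\<Prod>c\<in>I. ennreal (normal_density (a c) \<sigma> (y c)))"
        by (rule prod_ennreal[symmetric]) simp
      moreover have "indicator (PiE I A) y = (\<Prod>c\<in>I. indicator (A c) (y c) :: ennreal)"
        using y by (auto simp: space_PiM indicator_def PiE_iff I)
      ultimately show "ennreal (\<Prod>c\<in>I. normal_density (a c) \<sigma> (y c)) * indicator (PiE I A) y
          = (\<Prod>c\<in>I. ennreal (normal_density (a c) \<sigma> (y c)) * indicator (A c) (y c))"
        by (simp add: prod.distrib)
    qed
    also have "\<dots> = (\<Prod>c\<in>I. \<integral>\<^sup>+ t. ennreal (normal_density (a c) \<sigma> t) * indicator (A c) t \<partial>lborel)"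
      using Ab by (intro product_sigma_finite.product_nn_integral_prod[OF psf_lborel I]) auto
    also have "\<dots> = (\<Prod>c\<in>I. emeasure (density lborel (normal_density (a c) \<sigma>)) (A c))"
      using Ab by (intro prod.cong refl) (simp add: emeasure_density)
    finally show "emeasure (density (PiM I (\<lambda>_. (lborel::real measure))) (\<lambda>y. ennreal (\<Prod>c\<in>I. normal_density (a c) \<sigma> (y c)))) (PiE I A)
       = (\<Prod>c\<in>I. emeasure (density lborel (normal_density (a c) \<sigma>)) (A c))" .
  qed
  then show ?thesis by simp
qed

lemma meas_shift:
  "(\<lambda>z. \<lambda>c\<in>I. a c + z c) \<in> measurable (PiM I (\<lambda>_. density lborel (normal_density 0 \<sigma>))) (PiM I (\<lambda>_. (lborel::real measure)))"
proof -
  have "(\<lambda>z. \<lambda>c\<in>I. a c + z c) \<in> measurable (PiM I (\<lambda>_. lborel)) (PiM I (\<lambda>_. (lborel::real measure)))"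
    by (rule measurable_restrict) (auto intro!: borel_measurable_add measurable_component_singleton)
  moreover have "measurable (PiM I (\<lambda>_. density lborel (normal_density 0 \<sigma>))) (PiM I (\<lambda>_. (lborel::real measure)))
      = measurable (PiM I (\<lambda>_. lborel)) (PiM I (\<lambda>_. (lborel::real measure)))"
    by (intro measurable_cong_sets sets_PiM_dens refl)
  ultimately show ?thesis by simp
qed

lemma transfer:
  fixes f :: "('i \<Rightarrow> real) \<Rightarrow> ennreal"
  assumes I: "finite I" and sig: "0 < \<sigma>" and f: "f \<in> borel_measurable (PiM I (\<lambda>_. lborel))"
  shows "(\<integral>\<^sup>+ z. f (\<lambda>c\<in>I. a c + z c) \<partial>PiM I (\<lambda>_. density lborel (normal_density 0 \<sigma>)))
       = (\<integral>\<^sup>+ y. ennreal (\<Prod>c\<in>I. normal_density (a c) \<sigma> (y c)) * f y \<partial>PiM I (\<lambda>_. lborel))"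
proof -
  have "(\<integral>\<^sup>+ z. f (\<lambda>c\<in>I. a c + z c) \<partial>PiM I (\<lambda>_. density lborel (normal_density 0 \<sigma>)))
     = (\<integral>\<^sup>+ y. f y \<partial>distr (PiM I (\<lambda>_. density lborel (normal_density 0 \<sigma>))) (PiM I (\<lambda>_. lborel)) (\<lambda>z. \<lambda>c\<in>I. a c + z c))"
    using f by (intro nn_integral_distr[symmetric] meas_shift) simp
  also have "\<dots> = (\<integral>\<^sup>+ y. f y \<partial>PiM I (\<lambda>c. density lborel (normal_density (a c) \<sigma>)))"
    by (simp only: shiftPiM[OF I sig])
  also have "\<dots> = (\<integral>\<^sup>+ y. f y \<partial>density (PiM I (\<lambda>_. (lborel::real measure))) (\<lambda>y. ennreal (\<Prod>c\<in>I. normal_density (a c) \<sigma> (y c))))"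
    by (simp only: densPiM[OF I sig])
  also have "\<dots> = (\<integral>\<^sup>+ y. ennreal (\<Prod>c\<in>I. normal_density (a c) \<sigma> (y c)) * f y \<partial>PiM I (\<lambda>_. lborel))"
    by (rule nn_integral_density[OF _ f]) (rule measurable_compose[OF meas_dens]; simp)
  finally show ?thesis .
qed

lemma int_dens:
  assumes I: "finite I" and sig: "0 < \<sigma>"
  shows "(\<integral>\<^sup>+ y. ennreal (\<Prod>c\<in>I. normal_density (a c) \<sigma> (y c)) \<partial>PiM I (\<lambda>_. (lborel::real measure))) = 1"
proof -
  have "(\<integral>\<^sup>+ y. ennreal (\<Prod>c\<in>I. normal_density (a c) \<sigma> (y c)) \<partial>PiM I (\<lambda>_. (lborel::real measure)))
    = (\<integral>\<^sup>+ y. (\<Prod>c\<in>I. ennreal (normal_density (a c) \<sigma> (y c))) \<partial>PiM I (\<lambda>_. (lborel::real measure)))"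
    by (intro nn_integral_cong prod_ennreal[symmetric]) simp
  also have "\<dots> = (\<Prod>c\<in>I. \<integral>\<^sup>+ t. ennreal (normal_density (a c) \<sigma> t) \<partial>lborel)"
    by (intro product_sigma_finite.product_nn_integral_prod[OF psf_lborel I]) auto
  also have "\<dots> = 1"
  proof (intro prod.neutral ballI)
    fix c
    interpret prob_space "density lborel (normal_density (a c) \<sigma>)"
      by (rule prob_space_normal_density[OF sig])
    have "emeasure (density lborel (normal_density (a c) \<sigma>)) UNIV = 1"
      using emeasure_space_1 by simp
    then show "(\<integral>\<^sup>+ t. ennreal (normal_density (a c) \<sigma> t) \<partial>lborel) = 1"
      by (simp add: emeasure_density)
  qed
  finally show ?thesis .
qed


lemma sum_prod_bern:
  assumes "finite T"
  shows "(\<Sum>f\<in>PiE T (\<lambda>_. UNIV). \<Prod>c\<in>T. bern q (f c)) = 1"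
proof -
  have "(\<Sum>f\<in>PiE T (\<lambda>_. UNIV). \<Prod>c\<in>T. bern q (f c)) = (\<Prod>c\<in>T. \<Sum>b\<in>UNIV. bern q b)"
    by (rule prod_sum_PiE[symmetric]) (use assms in auto)
  also have "\<dots> = 1" by (simp add: UNIV_bool bern_def)
  finally show ?thesis .
qed

lemma class_sum:
  assumes G: "finite G" and S: "S \<subseteq> G" and x: "x \<in> PiE G (\<lambda>_. UNIV)"
  shows "(\<Sum>x'\<in>{x'\<in>PiE G (\<lambda>_. UNIV). \<forall>c\<in>S. x' c = x c}. \<Prod>c\<in>G - S. bern q (x' c)) = 1"
proof -
  have "(\<Sum>x'\<in>{x'\<in>PiE G (\<lambda>_. UNIV). \<forall>c\<in>S. x' c = x c}. \<Prod>c\<in>G - S. bern q (x' c))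
      = (\<Sum>f\<in>PiE (G - S) (\<lambda>_. UNIV). \<Prod>c\<in>G - S. bern q (f c))"
  proof (rule sum.reindex_bij_witness[where j="\<lambda>x'. restrict x' (G - S)"
        and i="\<lambda>f. \<lambda>c. if c \<in> G - S then f c else x c"])
    fix a assume a: "a \<in> {x'\<in>PiE G (\<lambda>_. UNIV). \<forall>c\<in>S. x' c = x c}"
    show "(\<lambda>c. if c \<in> G - S then restrict a (G - S) c else x c) = a"
    proof
      fix c show "(if c \<in> G - S then restrict a (G - S) c else x c) = a c"
        using a x by (cases "c \<in> G") (auto simp: PiE_def extensional_def)
    qed
    show "restrict a (G - S) \<in> PiE (G - S) (\<lambda>_. UNIV)" by simp
    show "(\<Prod>c\<in>G - S. bern q (restrict a (G - S) c)) = (\<Prod>c\<in>G - S. bern q (a c))"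
      by (intro prod.cong) auto
  next
    fix b :: "_ \<Rightarrow> bool" assume b: "b \<in> PiE (G - S) (\<lambda>_. UNIV)"
    show "restrict (\<lambda>c. if c \<in> G - S then b c else x c) (G - S) = b"
      using b by (auto simp: PiE_def extensional_def restrict_def)
    show "(\<lambda>c. if c \<in> G - S then b c else x c) \<in> {x'\<in>PiE G (\<lambda>_. UNIV). \<forall>c\<in>S. x' c = x c}"
      using b x S by (auto simp: PiE_def extensional_def)
  qed
  also have "\<dots> = 1" by (rule sum_prod_bern) (use G in auto)
  finally show ?thesis .
qed

lemma finite_grid[simp]: "finite (grid N)" by (simp add: grid_def)
lemma card_grid: "card (grid N) = N^2" by (simp add: grid_def power2_eq_square)
lemma finite_inputs[simp]: "finite (inputs N)" by (simp add: inputs_def finite_PiE)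
lemma finite_patterns[simp]: "finite (patterns K N)"
  unfolding patterns_def by (rule finite_subset[of _ "Pow (grid N)"]) auto

lemma sum_prX: "(\<Sum>x\<in>inputs N. prX q N x) = 1"
  unfolding inputs_def prX_def by (rule sum_prod_bern) simp

lemma sum_prPhi:
  assumes pnn: "\<forall>k\<le>K. 0 \<le> p k" and psum: "(\<Sum>k\<le>K. p k) = 1" and KN: "K \<le> N^2"
  shows "(\<Sum>\<phi>\<in>patterns K N. prPhi p N \<phi>) = 1"
proof -
  have P: "patterns K N = (\<Union>k\<in>{..K}. {\<phi>. \<phi> \<subseteq> grid N \<and> card \<phi> = k})"
    by (auto simp: patterns_def)
  have "(\<Sum>\<phi>\<in>patterns K N. prPhi p N \<phi>) = (\<Sum>k\<le>K. \<Sum>\<phi>\<in>{\<phi>. \<phi> \<subseteq> grid N \<and> card \<phi> = k}. prPhi p N \<phi>)"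
    unfolding P by (rule sum.UNION_disjoint) (auto intro: finite_subset[of _ "Pow (grid N)"])
  also have "\<dots> = (\<Sum>k\<le>K. p k)"
  proof (intro sum.cong refl)
    fix k assume k: "k \<in> {..K}"
    have "(\<Sum>\<phi>\<in>{\<phi>. \<phi> \<subseteq> grid N \<and> card \<phi> = k}. prPhi p N \<phi>)
        = (\<Sum>\<phi>\<in>{\<phi>. \<phi> \<subseteq> grid N \<and> card \<phi> = k}. p k / real (N^2 choose k))"
      by (intro sum.cong) (auto simp: prPhi_def)
    also have "\<dots> = real (N^2 choose k) * (p k / real (N^2 choose k))"
      by (simp add: n_subsets card_grid)
    also have "\<dots> = p k"
    proof -
      have "k \<le> N^2" using k KN by simp
      then have "(N^2 choose k) \<noteq> 0" by simp
      then show ?thesis by simp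
    qed
    finally show "(\<Sum>\<phi>\<in>{\<phi>. \<phi> \<subseteq> grid N \<and> card \<phi> = k}. prPhi p N \<phi>) = p k" .
  qed
  finally show ?thesis using psum by simp
qed


lemma class_identity:
  fixes A B h S :: "'a \<Rightarrow> real" and R :: "'a \<Rightarrow> 'a \<Rightarrow> bool"
  assumes I: "finite I" and symR: "\<And>x y. R x y \<Longrightarrow> R y x"
    and AR: "\<And>x x'. x \<in> I \<Longrightarrow> x' \<in> I \<Longrightarrow> R x x' \<Longrightarrow> A x = A x'"
    and SR: "\<And>x x'. x \<in> I \<Longrightarrow> x' \<in> I \<Longrightarrow> R x x' \<Longrightarrow> S x = S x'"
    and Sdef: "\<And>x. x \<in> I \<Longrightarrow> S x = (\<Sum>x'\<in>{x'. x' \<in> I \<and> R x x'}. B x' * h x')"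
    and Spos: "\<And>x. x \<in> I \<Longrightarrow> S x \<noteq> 0"
    and Bsum: "\<And>x. x \<in> I \<Longrightarrow> (\<Sum>x'\<in>{x'. x' \<in> I \<and> R x x'}. B x') = 1"
  shows "(\<Sum>x\<in>I. A x * B x * h x / S x) = (\<Sum>x\<in>I. A x * B x)"
proof -
  have "(\<Sum>x\<in>I. A x * B x) = (\<Sum>x\<in>I. A x * B x * (\<Sum>x'\<in>{x'. x' \<in> I \<and> R x x'}. B x' * h x') / S x)"
    by (intro sum.cong refl) (simp add: Sdef[symmetric] Spos)
  also have "\<dots> = (\<Sum>x\<in>I. \<Sum>x'\<in>{x'. x' \<in> I \<and> R x x'}. A x * B x * (B x' * h x') / S x)"
    by (simp add: sum_distrib_left sum_divide_distrib)
  also have "\<dots> = (\<Sum>x'\<in>I. \<Sum>x\<in>{x. x \<in> I \<and> R x x'}. A x * B x * (B x' * h x') / S x)"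
    by (rule sum.swap_restrict[OF I I])
  also have "\<dots> = (\<Sum>x'\<in>I. \<Sum>x\<in>{x. x \<in> I \<and> R x' x}. A x' * B x' * h x' / S x' * B x)"
  proof (intro sum.cong refl)
    fix x' x assume x': "x' \<in> I" and x: "x \<in> {x. x \<in> I \<and> R x' x}"
    then have "R x x'" "x \<in> I" using symR by auto
    then have "A x = A x'" "S x = S x'" using AR SR x' by auto
    then show "A x * B x * (B x' * h x') / S x = A x' * B x' * h x' / S x' * B x" by simp
  next
    fix x' assume "x' \<in> I"
    show "{x. x \<in> I \<and> R x x'} = {x. x \<in> I \<and> R x' x}" using symR by blast
  qed
  also have "\<dots> = (\<Sum>x'\<in>I. A x' * B x' * h x' / S x')"
  proof (intro sum.cong refl)
    fix x' assume x': "x' \<in> I"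
    have "(\<Sum>x\<in>{x. x \<in> I \<and> R x' x}. A x' * B x' * h x' / S x' * B x)
        = A x' * B x' * h x' / S x' * (\<Sum>x\<in>{x. x \<in> I \<and> R x' x}. B x)"
      by (rule sum_distrib_left[symmetric])
    also have "\<dots> = A x' * B x' * h x' / S x'" using Bsum[OF x'] by simp
    finally show "(\<Sum>x\<in>{x. x \<in> I \<and> R x' x}. A x' * B x' * h x' / S x' * B x) = A x' * B x' * h x' / S x'" .
  qed
  finally show ?thesis by simp
qed

lemma int_lin:
  fixes g :: "'b \<Rightarrow> ('i \<Rightarrow> real) \<Rightarrow> real"
  assumes A: "finite A" and w: "\<And>a. a \<in> A \<Longrightarrow> 0 \<le> w a"
    and gm: "\<And>a. a \<in> A \<Longrightarrow> g a \<in> borel_measurable M"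
    and gnn: "\<And>a y. a \<in> A \<Longrightarrow> 0 \<le> g a y"
    and gi: "\<And>a. a \<in> A \<Longrightarrow> (\<integral>\<^sup>+ y. ennreal (g a y) \<partial>M) = 1"
  shows "(\<integral>\<^sup>+ y. ennreal (\<Sum>a\<in>A. w a * g a y) \<partial>M) = ennreal (\<Sum>a\<in>A. w a)"
proof -
  have "(\<integral>\<^sup>+ y. ennreal (\<Sum>a\<in>A. w a * g a y) \<partial>M) = (\<integral>\<^sup>+ y. (\<Sum>a\<in>A. ennreal (w a) * ennreal (g a y)) \<partial>M)"
    by (intro nn_integral_cong) (simp add: sum_ennreal[symmetric] w gnn ennreal_mult)
  also have "\<dots> = (\<Sum>a\<in>A. \<integral>\<^sup>+ y. ennreal (w a) * ennreal (g a y) \<partial>M)"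
    by (rule nn_integral_sum) (use gm in auto)
  also have "\<dots> = (\<Sum>a\<in>A. ennreal (w a))"
  proof (intro sum.cong refl)
    fix a assume a: "a \<in> A"
    have "(\<integral>\<^sup>+ y. ennreal (w a) * ennreal (g a y) \<partial>M) = ennreal (w a) * (\<integral>\<^sup>+ y. ennreal (g a y) \<partial>M)"
      by (rule nn_integral_cmult) (use gm[OF a] in simp)
    then show "(\<integral>\<^sup>+ y. ennreal (w a) * ennreal (g a y) \<partial>M) = ennreal (w a)" using gi[OF a] by simp
  qed
  also have "\<dots> = ennreal (\<Sum>a\<in>A. w a)" by (simp add: sum_ennreal w)
  finally show ?thesis .
qed

lemma sf_sub: "sfcells N \<phi> \<subseteq> grid N" by (auto simp: sfcells_def)

context
  fixes R0 R1 Rs \<sigma> q :: real and K :: nat and p :: "nat \<Rightarrow> real"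
  assumes sig: "0 < \<sigma>" and q0: "0 < q" and q1: "q < 1"
    and pnn: "\<forall>k\<le>K. 0 \<le> p k" and psum: "(\<Sum>k\<le>K. p k) = 1"
begin

lemma bern_pos: "0 < bern q b" using q0 q1 by (simp add: bern_def)

lemma prX_pos: "0 < prX q N x" unfolding prX_def by (intro prod_pos) (simp add: bern_pos)

lemma prPhi_nn: "\<phi> \<in> patterns K N \<Longrightarrow> 0 \<le> prPhi p N \<phi>"
  using pnn by (auto simp: prPhi_def patterns_def)

lemma dPhi_pos: "0 < dYXPhi R0 R1 Rs \<sigma> N y x \<phi>"
  unfolding dYXPhi_def by (intro prod_pos) (simp add: normal_density_pos sig)

lemma dYX_ge: "\<phi> \<in> patterns K N \<Longrightarrow> prPhi p N \<phi> * dYXPhi R0 R1 Rs \<sigma> N y x \<phi> \<le> dYX R0 R1 Rs \<sigma> K p N y x"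
  unfolding dYX_def
  by (rule member_le_sum[where f="\<lambda>\<phi>. prPhi p N \<phi> * dYXPhi R0 R1 Rs \<sigma> N y x \<phi>"])
     (auto intro!: mult_nonneg_nonneg prPhi_nn less_imp_le[OF dPhi_pos])

lemma dYX_nn: "0 \<le> dYX R0 R1 Rs \<sigma> K p N y x"
  unfolding dYX_def by (auto intro!: sum_nonneg mult_nonneg_nonneg prPhi_nn less_imp_le[OF dPhi_pos])

lemma dY_nn: "0 \<le> dY R0 R1 Rs \<sigma> q K p N y"
  unfolding dY_def by (auto intro!: sum_nonneg mult_nonneg_nonneg dYX_nn less_imp_le[OF prX_pos])

lemma dsf_pos:
  assumes x: "x \<in> inputs N"
  shows "0 < dYXsfPhi R0 R1 Rs \<sigma> q N y x \<phi>"
proof -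
  let ?f = "\<lambda>x'. (\<Prod>c\<in>grid N - sfcells N \<phi>. bern q (x' c)) * dYXPhi R0 R1 Rs \<sigma> N y x' \<phi>"
  have "0 < ?f x" by (intro mult_pos_pos prod_pos dPhi_pos) (simp add: bern_pos)
  also have "?f x \<le> dYXsfPhi R0 R1 Rs \<sigma> q N y x \<phi>"
    unfolding dYXsfPhi_def
    by (rule member_le_sum[where f="?f"])
       (use x in \<open>auto intro!: mult_nonneg_nonneg prod_nonneg less_imp_le[OF bern_pos] less_imp_le[OF dPhi_pos]
            intro: finite_subset[of _ "inputs N"]\<close>)
  finally show ?thesis .
qed

lemma prX_split:
  "prX q N x = (\<Prod>c\<in>sfcells N \<phi>. bern q (x c)) * (\<Prod>c\<in>grid N - sfcells N \<phi>. bern q (x c))"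
  unfolding prX_def using prod.subset_diff[OF sf_sub finite_grid] by (simp add: mult.commute)

lemma class_id:
  "(\<Sum>x\<in>inputs N. prX q N x * dYXPhi R0 R1 Rs \<sigma> N y x \<phi> / dYXsfPhi R0 R1 Rs \<sigma> q N y x \<phi>) = 1"
proof -
  let ?A = "\<lambda>x. \<Prod>c\<in>sfcells N \<phi>. bern q (x c)"
  let ?B = "\<lambda>x. \<Prod>c\<in>grid N - sfcells N \<phi>. bern q (x c)"
  let ?R = "\<lambda>x x'. \<forall>c\<in>sfcells N \<phi>. x' c = x c"
  have "(\<Sum>x\<in>inputs N. ?A x * ?B x * dYXPhi R0 R1 Rs \<sigma> N y x \<phi> / dYXsfPhi R0 R1 Rs \<sigma> q N y x \<phi>)
      = (\<Sum>x\<in>inputs N. ?A x * ?B x)"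
  proof (rule class_identity[where R="?R"])
    show "finite (inputs N)" by simp
    show "?R y' x'" if "?R x' y'" for x' y' using that by auto
    show "?A x = ?A x'" if "?R x x'" for x x' using that by (intro prod.cong) auto
    show "dYXsfPhi R0 R1 Rs \<sigma> q N y x \<phi> = dYXsfPhi R0 R1 Rs \<sigma> q N y x' \<phi>" if "?R x x'" for x x'
    proof -
      have "{x''\<in>inputs N. \<forall>c\<in>sfcells N \<phi>. x'' c = x c} = {x''\<in>inputs N. \<forall>c\<in>sfcells N \<phi>. x'' c = x' c}"
        using that by auto
      then show ?thesis unfolding dYXsfPhi_def by simp
    qed
    show "dYXsfPhi R0 R1 Rs \<sigma> q N y x \<phi> = (\<Sum>x'\<in>{x'. x' \<in> inputs N \<and> ?R x x'}. ?B x' * dYXPhi R0 R1 Rs \<sigma> N y x' \<phi>)" for x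
      unfolding dYXsfPhi_def by simp
    show "dYXsfPhi R0 R1 Rs \<sigma> q N y x \<phi> \<noteq> 0" if "x \<in> inputs N" for x
      using dsf_pos[OF that, where y=y and \<phi>=\<phi>] by linarith
    show "(\<Sum>x'\<in>{x'. x' \<in> inputs N \<and> ?R x x'}. ?B x') = 1" if "x \<in> inputs N" for x
      using class_sum[OF finite_grid[of N] sf_sub[of N \<phi>], where x=x and q=q] that by (simp add: inputs_def)
  qed
  then show ?thesis by (simp add: prX_split[symmetric] sum_prX)
qed


lemma dY_lower:
  assumes x: "x \<in> inputs N" and ph: "\<phi> \<in> patterns K N"
  shows "prPhi p N \<phi> * (\<Prod>c\<in>sfcells N \<phi>. bern q (x c)) * dYXsfPhi R0 R1 Rs \<sigma> q N y x \<phi>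
     \<le> dY R0 R1 Rs \<sigma> q K p N y"
proof -
  let ?cls = "{x'\<in>inputs N. \<forall>c\<in>sfcells N \<phi>. x' c = x c}"
  let ?A = "\<lambda>x. \<Prod>c\<in>sfcells N \<phi>. bern q (x c)"
  let ?B = "\<lambda>x. \<Prod>c\<in>grid N - sfcells N \<phi>. bern q (x c)"
  have fc: "finite ?cls" by (rule finite_subset[of _ "inputs N"]) auto
  have "prPhi p N \<phi> * ?A x * dYXsfPhi R0 R1 Rs \<sigma> q N y x \<phi>
      = (\<Sum>x'\<in>?cls. prPhi p N \<phi> * ?A x * (?B x' * dYXPhi R0 R1 Rs \<sigma> N y x' \<phi>))"
    unfolding dYXsfPhi_def by (simp add: sum_distrib_left)
  also have "\<dots> = (\<Sum>x'\<in>?cls. prX q N x' * (prPhi p N \<phi> * dYXPhi R0 R1 Rs \<sigma> N y x' \<phi>))"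
  proof (intro sum.cong refl)
    fix x' assume x': "x' \<in> ?cls"
    then have "?A x = ?A x'" by (intro prod.cong) auto
    then show "prPhi p N \<phi> * ?A x * (?B x' * dYXPhi R0 R1 Rs \<sigma> N y x' \<phi>)
        = prX q N x' * (prPhi p N \<phi> * dYXPhi R0 R1 Rs \<sigma> N y x' \<phi>)"
      by (simp add: prX_split[where \<phi>=\<phi>])
  qed
  also have "\<dots> \<le> (\<Sum>x'\<in>?cls. prX q N x' * dYX R0 R1 Rs \<sigma> K p N y x')"
    by (intro sum_mono mult_left_mono dYX_ge ph less_imp_le[OF prX_pos])
  also have "\<dots> \<le> (\<Sum>x'\<in>inputs N. prX q N x' * dYX R0 R1 Rs \<sigma> K p N y x')"
    by (rule sum_mono2) (auto intro!: mult_nonneg_nonneg dYX_nn less_imp_le[OF prX_pos])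
  also have "\<dots> = dY R0 R1 Rs \<sigma> q K p N y" by (simp add: dY_def)
  finally show ?thesis .
qed

lemma m_dPhi: "(\<lambda>y. dYXPhi R0 R1 Rs \<sigma> N y x \<phi>) \<in> borel_measurable (PiM (grid N) (\<lambda>_. lborel))"
  unfolding dYXPhi_def by (rule meas_dens)

lemma m_dYX: "(\<lambda>y. dYX R0 R1 Rs \<sigma> K p N y x) \<in> borel_measurable (PiM (grid N) (\<lambda>_. lborel))"
  unfolding dYX_def by (intro borel_measurable_sum borel_measurable_times measurable_const m_dPhi) simp_all

lemma m_dY: "(\<lambda>y. dY R0 R1 Rs \<sigma> q K p N y) \<in> borel_measurable (PiM (grid N) (\<lambda>_. lborel))"
  unfolding dY_def by (intro borel_measurable_sum borel_measurable_times measurable_const m_dYX) simp_all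

lemma m_dsf: "(\<lambda>y. dYXsfPhi R0 R1 Rs \<sigma> q N y x \<phi>) \<in> borel_measurable (PiM (grid N) (\<lambda>_. lborel))"
  unfolding dYXsfPhi_def by (intro borel_measurable_sum borel_measurable_times measurable_const m_dPhi) simp_all

lemma i_dPhi: "(\<integral>\<^sup>+ y. ennreal (dYXPhi R0 R1 Rs \<sigma> N y x \<phi>) \<partial>PiM (grid N) (\<lambda>_. lborel)) = 1"
  unfolding dYXPhi_def by (rule int_dens[OF finite_grid sig])

lemma i_dYX:
  assumes KN: "K \<le> N^2"
  shows "(\<integral>\<^sup>+ y. ennreal (dYX R0 R1 Rs \<sigma> K p N y x) \<partial>PiM (grid N) (\<lambda>_. lborel)) = 1"
proof -
  have "(\<integral>\<^sup>+ y. ennreal (dYX R0 R1 Rs \<sigma> K p N y x) \<partial>PiM (grid N) (\<lambda>_. lborel))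
      = ennreal (\<Sum>\<phi>\<in>patterns K N. prPhi p N \<phi>)"
    unfolding dYX_def
    by (rule int_lin) (auto intro: prPhi_nn m_dPhi i_dPhi less_imp_le[OF dPhi_pos])
  also have "\<dots> = 1" using sum_prPhi[OF pnn psum KN] by simp
  finally show ?thesis .
qed

lemma i_dY:
  assumes KN: "K \<le> N^2"
  shows "(\<integral>\<^sup>+ y. ennreal (dY R0 R1 Rs \<sigma> q K p N y) \<partial>PiM (grid N) (\<lambda>_. lborel)) = 1"
proof -
  have "(\<integral>\<^sup>+ y. ennreal (dY R0 R1 Rs \<sigma> q K p N y) \<partial>PiM (grid N) (\<lambda>_. lborel))
      = ennreal (\<Sum>x\<in>inputs N. prX q N x)"
    unfolding dY_def
    by (rule int_lin) (auto intro: less_imp_le[OF prX_pos] m_dYX i_dYX[OF KN] dYX_nn)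
  also have "\<dots> = 1" using sum_prX by simp
  finally show ?thesis .
qed

end

lemma cong_dPhi: "(\<And>c. c \<in> grid N \<Longrightarrow> y c = y' c) \<Longrightarrow> dYXPhi R0 R1 Rs \<sigma> N y x \<phi> = dYXPhi R0 R1 Rs \<sigma> N y' x \<phi>"
  unfolding dYXPhi_def by (intro prod.cong) auto

lemma cong_dYX: "(\<And>c. c \<in> grid N \<Longrightarrow> y c = y' c) \<Longrightarrow> dYX R0 R1 Rs \<sigma> K p N y x = dYX R0 R1 Rs \<sigma> K p N y' x"
  unfolding dYX_def by (intro sum.cong refl arg_cong2[where f="(*)"] cong_dPhi) auto

lemma cong_dY: "(\<And>c. c \<in> grid N \<Longrightarrow> y c = y' c) \<Longrightarrow> dY R0 R1 Rs \<sigma> q K p N y = dY R0 R1 Rs \<sigma> q K p N y'"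
  unfolding dY_def by (intro sum.cong refl arg_cong2[where f="(*)"] cong_dYX) auto

lemma cong_dsf: "(\<And>c. c \<in> grid N \<Longrightarrow> y c = y' c) \<Longrightarrow> dYXsfPhi R0 R1 Rs \<sigma> q N y x \<phi> = dYXsfPhi R0 R1 Rs \<sigma> q N y' x \<phi>"
  unfolding dYXsfPhi_def by (intro sum.cong refl arg_cong2[where f="(*)"] cong_dPhi) auto

lemma assemble:
  fixes w :: "'a \<Rightarrow> 'b \<Rightarrow> real" and G :: "'a \<Rightarrow> 'b \<Rightarrow> 'c set"
  assumes Q: "prob_space Q" and X: "finite X" and P: "finite P"
    and w: "\<And>x \<phi>. x \<in> X \<Longrightarrow> \<phi> \<in> P \<Longrightarrow> 0 \<le> w x \<phi>"
    and ws: "(\<Sum>x\<in>X. \<Sum>\<phi>\<in>P. w x \<phi>) = 1"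
    and Gm: "\<And>x \<phi>. x \<in> X \<Longrightarrow> \<phi> \<in> P \<Longrightarrow> G x \<phi> \<in> sets Q"
    and bnd: "(\<Sum>x\<in>X. \<Sum>\<phi>\<in>P. ennreal (w x \<phi>) * emeasure Q (space Q - G x \<phi>)) \<le> ennreal \<delta>"
    and d: "0 \<le> \<delta>"
  shows "\<bar>(\<Sum>x\<in>X. \<Sum>\<phi>\<in>P. w x \<phi> * measure Q (G x \<phi>)) - 1\<bar> \<le> \<delta>"
proof -
  interpret prob_space Q by (rule Q)
  define D where "D = (\<Sum>x\<in>X. \<Sum>\<phi>\<in>P. w x \<phi> * measure Q (space Q - G x \<phi>))"
  have D0: "0 \<le> D" unfolding D_def by (intro sum_nonneg mult_nonneg_nonneg w) auto
  have "(\<Sum>x\<in>X. \<Sum>\<phi>\<in>P. w x \<phi> * measure Q (G x \<phi>))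
      = (\<Sum>x\<in>X. \<Sum>\<phi>\<in>P. w x \<phi> - w x \<phi> * measure Q (space Q - G x \<phi>))"
    by (intro sum.cong refl) (simp add: prob_compl Gm algebra_simps)
  also have "\<dots> = 1 - D" by (simp add: D_def sum_subtractf ws)
  finally have eq: "(\<Sum>x\<in>X. \<Sum>\<phi>\<in>P. w x \<phi> * measure Q (G x \<phi>)) = 1 - D" .
  have "ennreal D = (\<Sum>x\<in>X. \<Sum>\<phi>\<in>P. ennreal (w x \<phi>) * emeasure Q (space Q - G x \<phi>))"
    unfolding D_def
    by (simp add: sum_ennreal[symmetric] w ennreal_mult emeasure_eq_measure mult_nonneg_nonneg sum_nonneg)
  with bnd have "ennreal D \<le> ennreal \<delta>" by simp
  then have "D \<le> \<delta>" using d by simp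
  then show ?thesis using eq D0 by simp
qed

lemma markov_pair:
  fixes r :: "('i \<Rightarrow> real) \<Rightarrow> real" and E :: "('i \<Rightarrow> real) \<Rightarrow> bool" and m :: "'i \<Rightarrow> real"
  assumes I: "finite I" and sig: "0 < \<sigma>"
    and rm: "r \<in> borel_measurable (PiM I (\<lambda>_. lborel))"
    and Econg: "\<And>y y'. (\<And>c. c \<in> I \<Longrightarrow> y c = y' c) \<Longrightarrow> E y = E y'"
    and bad: "\<And>y. \<not> E y \<Longrightarrow> exp t \<le> r y"
  shows "emeasure (PiM I (\<lambda>_. density lborel (normal_density 0 \<sigma>)))
            {z \<in> space (PiM I (\<lambda>_. density lborel (normal_density 0 \<sigma>))). \<not> E (\<lambda>c. m c + z c)}
       \<le> ennreal (exp (-t)) * (\<integral>\<^sup>+ y. ennreal (\<Prod>c\<in>I. normal_density (m c) \<sigma> (y c)) * ennreal (r y) \<partial>PiM I (\<lambda>_. lborel))"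
proof -
  let ?Q = "PiM I (\<lambda>_. density lborel (normal_density 0 \<sigma>))"
  let ?u = "\<lambda>z. ennreal (r (\<lambda>c\<in>I. m c + z c))"
  have um: "?u \<in> borel_measurable ?Q"
    by (rule measurable_compose[OF meas_shift measurable_compose[OF rm measurable_ennreal]])
  have cm: "(\<lambda>z. ennreal (exp (-t)) * ?u z) \<in> borel_measurable ?Q"
    using um by simp
  have Bm: "(\<lambda>z. ennreal (exp (-t)) * ?u z) -` {1..} \<inter> space ?Q \<in> sets ?Q"
    by (rule measurable_sets[OF cm]) simp
  have sub: "{z \<in> space ?Q. \<not> E (\<lambda>c. m c + z c)} \<subseteq> (\<lambda>z. ennreal (exp (-t)) * ?u z) -` {1..} \<inter> space ?Q"
  proof (rule subsetI)
    fix z assume zz: "z \<in> {z \<in> space ?Q. \<not> E (\<lambda>c. m c + z c)}"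
    then have zs: "z \<in> space ?Q" and nE: "\<not> E (\<lambda>c. m c + z c)" by auto
    have "E (\<lambda>c. m c + z c) = E (\<lambda>c\<in>I. m c + z c)" by (rule Econg) simp
    with nE have "exp t \<le> r (\<lambda>c\<in>I. m c + z c)" using bad by simp
    then have "1 \<le> exp (-t) * r (\<lambda>c\<in>I. m c + z c)"
      by (simp add: exp_minus field_simps)
    then have "ennreal 1 \<le> ennreal (exp (-t) * r (\<lambda>c\<in>I. m c + z c))"
      by (rule ennreal_leI)
    then have "ennreal (exp (-t)) * ?u z \<in> {1..}"
      by (simp add: ennreal_mult')
    then show "z \<in> (\<lambda>z. ennreal (exp (-t)) * ?u z) -` {1..} \<inter> space ?Q" using zs by simp
  qed
  have "emeasure ?Q {z \<in> space ?Q. \<not> E (\<lambda>c. m c + z c)}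
      \<le> emeasure ?Q ((\<lambda>z. ennreal (exp (-t)) * ?u z) -` {1..} \<inter> space ?Q)"
    by (rule emeasure_mono[OF sub Bm])
  also have "(\<lambda>z. ennreal (exp (-t)) * ?u z) -` {1..} \<inter> space ?Q = {z \<in> space ?Q. 1 \<le> ennreal (exp (-t)) * ?u z}"
    by auto
  also have "emeasure ?Q \<dots> \<le> ennreal (exp (-t)) * (\<integral>\<^sup>+ z. ?u z * indicator (space ?Q) z \<partial>?Q)"
    by (rule nn_integral_Markov_inequality) (use um in auto)
  also have "(\<integral>\<^sup>+ z. ?u z * indicator (space ?Q) z \<partial>?Q) = (\<integral>\<^sup>+ z. ?u z \<partial>?Q)"
    by (intro nn_integral_cong) simp
  also have "\<dots> = (\<integral>\<^sup>+ y. ennreal (\<Prod>c\<in>I. normal_density (m c) \<sigma> (y c)) * ennreal (r y) \<partial>PiM I (\<lambda>_. lborel))"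
    by (rule transfer[OF I sig]) (rule measurable_compose[OF rm measurable_ennreal])
  finally show ?thesis .
qed
lemma bad_from_lower:
  fixes Lb r n e T :: real
  assumes "0 < Lb" "- T < ln Lb" "Lb \<le> r" "\<not> (\<bar>ln r\<bar> / n < e / 2)" "0 < n" "T = e * n / 2"
  shows "exp T \<le> r"
proof -
  have r0: "0 < r" using assms by linarith
  have "ln Lb \<le> ln r" using assms r0 by simp
  then have l1: "- T < ln r" using assms by linarith
  have "e / 2 \<le> \<bar>ln r\<bar> / n" using assms(4) by linarith
  then have "e / 2 * n \<le> \<bar>ln r\<bar>" using assms(5) by (simp add: le_divide_eq)
  then have "T \<le> \<bar>ln r\<bar>" using assms(6) by simp
  then have "T \<le> ln r" using l1 by linarith
  then have "exp T \<le> exp (ln r)" by simp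
  then show ?thesis using r0 by simp
qed

lemma event_meas:
  fixes f :: "('i \<Rightarrow> real) \<Rightarrow> real"
  assumes fm: "f \<in> borel_measurable (PiM I (\<lambda>_. lborel))"
    and fcong: "\<And>y y'. (\<And>c. c \<in> I \<Longrightarrow> y c = y' c) \<Longrightarrow> f y = f y'"
  shows "{z \<in> space (PiM I (\<lambda>_. density lborel (normal_density 0 \<sigma>))). f (\<lambda>c. m c + z c) < b}
     \<in> sets (PiM I (\<lambda>_. density lborel (normal_density 0 \<sigma>)))"
proof -
  let ?Q = "PiM I (\<lambda>_. density lborel (normal_density 0 \<sigma>))"
  have gm: "(\<lambda>z. f (\<lambda>c\<in>I. m c + z c)) \<in> borel_measurable ?Q"
    by (rule measurable_compose[OF meas_shift fm])
  have "(\<lambda>z. f (\<lambda>c\<in>I. m c + z c)) -` {..<b} \<inter> space ?Q \<in> sets ?Q"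
    by (rule measurable_sets[OF gm]) simp
  also have "(\<lambda>z. f (\<lambda>c\<in>I. m c + z c)) -` {..<b} \<inter> space ?Q
      = {z \<in> space ?Q. f (\<lambda>c. m c + z c) < b}"
  proof -
    have "\<And>z. f (\<lambda>c\<in>I. m c + z c) = f (\<lambda>c. m c + z c)" by (rule fcong) simp
    then show ?thesis by auto
  qed
  finally show ?thesis .
qed

context
  fixes R0 R1 Rs \<sigma> q :: real and K :: nat and p :: "nat \<Rightarrow> real"
  assumes sig: "0 < \<sigma>" and q0: "0 < q" and q1: "q < 1"
    and pnn: "\<forall>k\<le>K. 0 \<le> p k" and psum: "(\<Sum>k\<le>K. p k) = 1"
begin

lemma weights: "K \<le> N^2 \<Longrightarrow> (\<Sum>x\<in>inputs N. \<Sum>\<phi>\<in>patterns K N. prX q N x * prPhi p N \<phi>) = 1"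
  by (simp add: sum_distrib_left[symmetric] sum_prPhi[OF pnn psum] sum_prX)

lemma noise_prob: "prob_space (noise \<sigma> N)"
  unfolding noise_def by (rule prob_space_PiM) (rule prob_space_normal_density[OF sig])

lemma part2_N:
  fixes \<epsilon> Lb :: real
  assumes N1: "1 \<le> N" and KN: "K \<le> N^2" and Lb: "0 < Lb"
    and lnLb: "- (\<epsilon> * real (N^2) / 2) < ln Lb"
    and lower: "\<And>\<phi>. \<phi> \<in> patterns K N \<Longrightarrow> 0 < prPhi p N \<phi> \<Longrightarrow> Lb \<le> prPhi p N \<phi>"
  shows "\<bar>chanprob R0 R1 Rs \<sigma> q K p N
            (\<lambda>x \<phi> y. \<bar>ln (dYX R0 R1 Rs \<sigma> K p N y x / dYXPhi R0 R1 Rs \<sigma> N y x \<phi>)\<bar>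
                        / real (N^2) < \<epsilon> / 2) - 1\<bar> \<le> exp (- (\<epsilon> * real (N^2) / 2))"
proof -
  let ?T = "\<epsilon> * real (N^2) / 2"
  let ?Q = "noise \<sigma> N"
  let ?f = "\<lambda>x \<phi> y. \<bar>ln (dYX R0 R1 Rs \<sigma> K p N y x / dYXPhi R0 R1 Rs \<sigma> N y x \<phi>)\<bar> / real (N^2)"
  let ?G = "\<lambda>x \<phi>. {z \<in> space ?Q. ?f x \<phi> (\<lambda>c. cellmean R0 R1 Rs \<phi> x c + z c) < \<epsilon> / 2}"
  have n0: "0 < real (N^2)" using N1 by simp
  have fm: "?f x \<phi> \<in> borel_measurable (PiM (grid N) (\<lambda>_. lborel))" for x \<phi>
    by (intro borel_measurable_divide borel_measurable_abs borel_measurable_ln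
        m_dYX[OF sig q0 q1 pnn psum] m_dPhi[OF sig q0 q1 pnn psum] measurable_const) simp
  have fcong: "?f x \<phi> y = ?f x \<phi> y'" if "\<And>c. c \<in> grid N \<Longrightarrow> y c = y' c" for x \<phi> y y'
    using cong_dYX[OF that] cong_dPhi[OF that] by simp
  have trm: "ennreal (prX q N x * prPhi p N \<phi>) * emeasure ?Q (space ?Q - ?G x \<phi>)
      \<le> ennreal (prX q N x * prPhi p N \<phi>) * ennreal (exp (- ?T))"
    if x: "x \<in> inputs N" and ph: "\<phi> \<in> patterns K N" for x \<phi>
  proof (cases "prPhi p N \<phi> = 0")
    case True then show ?thesis by simp
  next
    case False
    then have pp: "0 < prPhi p N \<phi>" using prPhi_nn[OF sig q0 q1 pnn psum ph] by simp
    have r_ge: "Lb \<le> dYX R0 R1 Rs \<sigma> K p N y x / dYXPhi R0 R1 Rs \<sigma> N y x \<phi>" for y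
    proof -
      have d: "0 < dYXPhi R0 R1 Rs \<sigma> N y x \<phi>" by (rule dPhi_pos[OF sig q0 q1 pnn psum])
      have "Lb \<le> prPhi p N \<phi>" by (rule lower[OF ph pp])
      also have "prPhi p N \<phi> \<le> dYX R0 R1 Rs \<sigma> K p N y x / dYXPhi R0 R1 Rs \<sigma> N y x \<phi>"
        using dYX_ge[OF sig q0 q1 pnn psum ph, where y=y and x=x] d by (simp add: le_divide_eq)
      finally show ?thesis .
    qed
    have seteq: "space ?Q - ?G x \<phi> = {z \<in> space ?Q. \<not> ?f x \<phi> (\<lambda>c. cellmean R0 R1 Rs \<phi> x c + z c) < \<epsilon> / 2}"
      by blast
    have mk: "emeasure ?Q {z \<in> space ?Q. \<not> ?f x \<phi> (\<lambda>c. cellmean R0 R1 Rs \<phi> x c + z c) < \<epsilon> / 2} \<le> ennreal (exp (- ?T)) *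
        (\<integral>\<^sup>+ y. ennreal (\<Prod>c\<in>grid N. normal_density (cellmean R0 R1 Rs \<phi> x c) \<sigma> (y c))
            * ennreal (dYX R0 R1 Rs \<sigma> K p N y x / dYXPhi R0 R1 Rs \<sigma> N y x \<phi>) \<partial>PiM (grid N) (\<lambda>_. lborel))"
      unfolding noise_def
    proof (rule markov_pair[OF finite_grid sig, where E="\<lambda>y. ?f x \<phi> y < \<epsilon> / 2"
          and m="cellmean R0 R1 Rs \<phi> x" and r="\<lambda>y. dYX R0 R1 Rs \<sigma> K p N y x / dYXPhi R0 R1 Rs \<sigma> N y x \<phi>"])
      show "(\<lambda>y. dYX R0 R1 Rs \<sigma> K p N y x / dYXPhi R0 R1 Rs \<sigma> N y x \<phi>) \<in> borel_measurable (PiM (grid N) (\<lambda>_. lborel))"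
        by (intro borel_measurable_divide m_dYX[OF sig q0 q1 pnn psum] m_dPhi[OF sig q0 q1 pnn psum])
      show "(?f x \<phi> y < \<epsilon> / 2) = (?f x \<phi> y' < \<epsilon> / 2)" if "\<And>c. c \<in> grid N \<Longrightarrow> y c = y' c" for y y'
      proof -
        have "?f x \<phi> y = ?f x \<phi> y'" by (rule fcong) (rule that)
        then show ?thesis by (rule arg_cong[where f="\<lambda>v. v < \<epsilon> / 2"])
      qed
      show "exp ?T \<le> dYX R0 R1 Rs \<sigma> K p N y x / dYXPhi R0 R1 Rs \<sigma> N y x \<phi>" if "\<not> ?f x \<phi> y < \<epsilon> / 2" for y
        by (rule bad_from_lower[OF Lb _ r_ge that n0]) (use lnLb in auto)
    qed
    have ieq: "(\<integral>\<^sup>+ y. ennreal (\<Prod>c\<in>grid N. normal_density (cellmean R0 R1 Rs \<phi> x c) \<sigma> (y c))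
            * ennreal (dYX R0 R1 Rs \<sigma> K p N y x / dYXPhi R0 R1 Rs \<sigma> N y x \<phi>) \<partial>PiM (grid N) (\<lambda>_. lborel))
        = (\<integral>\<^sup>+ y. ennreal (dYX R0 R1 Rs \<sigma> K p N y x) \<partial>PiM (grid N) (\<lambda>_. lborel))"
    proof (rule nn_integral_cong)
      fix y
      have d: "0 < dYXPhi R0 R1 Rs \<sigma> N y x \<phi>" by (rule dPhi_pos[OF sig q0 q1 pnn psum])
      then show "ennreal (\<Prod>c\<in>grid N. normal_density (cellmean R0 R1 Rs \<phi> x c) \<sigma> (y c))
            * ennreal (dYX R0 R1 Rs \<sigma> K p N y x / dYXPhi R0 R1 Rs \<sigma> N y x \<phi>) = ennreal (dYX R0 R1 Rs \<sigma> K p N y x)"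
        unfolding dYXPhi_def[symmetric] by (simp add: ennreal_mult'[symmetric])
    qed
    have "emeasure ?Q (space ?Q - ?G x \<phi>) \<le> ennreal (exp (- ?T)) *
        (\<integral>\<^sup>+ y. ennreal (\<Prod>c\<in>grid N. normal_density (cellmean R0 R1 Rs \<phi> x c) \<sigma> (y c))
            * ennreal (dYX R0 R1 Rs \<sigma> K p N y x / dYXPhi R0 R1 Rs \<sigma> N y x \<phi>) \<partial>PiM (grid N) (\<lambda>_. lborel))"
      unfolding seteq by (rule mk)
    then have "emeasure ?Q (space ?Q - ?G x \<phi>) \<le> ennreal (exp (- ?T))"
      unfolding ieq i_dYX[OF sig q0 q1 pnn psum KN] by simp
    then show ?thesis by (rule mult_left_mono) simp
  qed
  have "\<bar>(\<Sum>x\<in>inputs N. \<Sum>\<phi>\<in>patterns K N. prX q N x * prPhi p N \<phi> * measure ?Q (?G x \<phi>)) - 1\<bar> \<le> exp (- ?T)"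
  proof (rule assemble[OF noise_prob finite_inputs finite_patterns])
    show "0 \<le> prX q N x * prPhi p N \<phi>" if "x \<in> inputs N" "\<phi> \<in> patterns K N" for x \<phi>
      using that by (intro mult_nonneg_nonneg less_imp_le[OF prX_pos[OF sig q0 q1 pnn psum]] prPhi_nn[OF sig q0 q1 pnn psum])
    show "(\<Sum>x\<in>inputs N. \<Sum>\<phi>\<in>patterns K N. prX q N x * prPhi p N \<phi>) = 1" by (rule weights[OF KN])
    show "?G x \<phi> \<in> sets ?Q" for x \<phi>
      unfolding noise_def by (rule event_meas[OF fm fcong])
    have "(\<Sum>x\<in>inputs N. \<Sum>\<phi>\<in>patterns K N. ennreal (prX q N x * prPhi p N \<phi>) * emeasure ?Q (space ?Q - ?G x \<phi>))
        \<le> (\<Sum>x\<in>inputs N. \<Sum>\<phi>\<in>patterns K N. ennreal (prX q N x * prPhi p N \<phi>) * ennreal (exp (- ?T)))"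
      by (intro sum_mono trm)
    also have "\<dots> = (\<Sum>x\<in>inputs N. \<Sum>\<phi>\<in>patterns K N. ennreal (prX q N x * prPhi p N \<phi> * exp (- ?T)))"
      by (intro sum.cong refl) (rule ennreal_mult''[symmetric], simp)
    also have "\<dots> = (\<Sum>x\<in>inputs N. ennreal (\<Sum>\<phi>\<in>patterns K N. prX q N x * prPhi p N \<phi> * exp (- ?T)))"
      by (intro sum.cong refl sum_ennreal mult_nonneg_nonneg less_imp_le[OF prX_pos[OF sig q0 q1 pnn psum]]
           prPhi_nn[OF sig q0 q1 pnn psum]) simp_all
    also have "\<dots> = ennreal (\<Sum>x\<in>inputs N. \<Sum>\<phi>\<in>patterns K N. prX q N x * prPhi p N \<phi> * exp (- ?T))"
      by (intro sum_ennreal sum_nonneg mult_nonneg_nonneg less_imp_le[OF prX_pos[OF sig q0 q1 pnn psum]]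
           prPhi_nn[OF sig q0 q1 pnn psum]) simp_all
    also have "\<dots> = ennreal ((\<Sum>x\<in>inputs N. \<Sum>\<phi>\<in>patterns K N. prX q N x * prPhi p N \<phi>) * exp (- ?T))"
      by (simp add: sum_distrib_right)
    also have "\<dots> = ennreal (exp (- ?T))" by (simp add: weights[OF KN])
    finally show "(\<Sum>x\<in>inputs N. \<Sum>\<phi>\<in>patterns K N. ennreal (prX q N x * prPhi p N \<phi>) * emeasure ?Q (space ?Q - ?G x \<phi>))
        \<le> ennreal (exp (- ?T))" .
  qed simp
  then show ?thesis unfolding chanprob_def by simp
qed


lemma sumJ_phi:
  assumes KN: "K \<le> N^2" and ph: "\<phi> \<in> patterns K N"
  shows "(\<Sum>x\<in>inputs N. ennreal (prX q N x * prPhi p N \<phi>) *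
      (\<integral>\<^sup>+ y. ennreal (\<Prod>c\<in>grid N. normal_density (cellmean R0 R1 Rs \<phi> x c) \<sigma> (y c))
            * ennreal (dY R0 R1 Rs \<sigma> q K p N y / dYXsfPhi R0 R1 Rs \<sigma> q N y x \<phi>) \<partial>PiM (grid N) (\<lambda>_. lborel)))
    = ennreal (prPhi p N \<phi>)"
proof -
  let ?L = "PiM (grid N) (\<lambda>_. lborel)"
  let ?g = "\<lambda>x y. dYXPhi R0 R1 Rs \<sigma> N y x \<phi> * (dY R0 R1 Rs \<sigma> q K p N y / dYXsfPhi R0 R1 Rs \<sigma> q N y x \<phi>)"
  let ?c = "\<lambda>x. prX q N x * prPhi p N \<phi>"
  have c0: "0 \<le> ?c x" for x
    by (intro mult_nonneg_nonneg less_imp_le[OF prX_pos[OF sig q0 q1 pnn psum]] prPhi_nn[OF sig q0 q1 pnn psum ph])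
  have g0: "0 \<le> ?g x y" if "x \<in> inputs N" for x y
    using dPhi_pos[OF sig q0 q1 pnn psum] dsf_pos[OF sig q0 q1 pnn psum that] dY_nn[OF sig q0 q1 pnn psum]
    by (intro mult_nonneg_nonneg divide_nonneg_pos) (auto intro: less_imp_le)
  have gm: "(\<lambda>y. ennreal (?g x y)) \<in> borel_measurable ?L" for x
    by (intro measurable_compose[OF _ measurable_ennreal] borel_measurable_times borel_measurable_divide
        m_dPhi[OF sig q0 q1 pnn psum] m_dY[OF sig q0 q1 pnn psum] m_dsf[OF sig q0 q1 pnn psum])
  have "(\<Sum>x\<in>inputs N. ennreal (?c x) *
      (\<integral>\<^sup>+ y. ennreal (\<Prod>c\<in>grid N. normal_density (cellmean R0 R1 Rs \<phi> x c) \<sigma> (y c))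
            * ennreal (dY R0 R1 Rs \<sigma> q K p N y / dYXsfPhi R0 R1 Rs \<sigma> q N y x \<phi>) \<partial>?L))
    = (\<Sum>x\<in>inputs N. ennreal (?c x) * (\<integral>\<^sup>+ y. ennreal (?g x y) \<partial>?L))"
  proof (intro sum.cong refl arg_cong2[where f="(*)"] nn_integral_cong)
    fix x y
    show "ennreal (\<Prod>c\<in>grid N. normal_density (cellmean R0 R1 Rs \<phi> x c) \<sigma> (y c))
            * ennreal (dY R0 R1 Rs \<sigma> q K p N y / dYXsfPhi R0 R1 Rs \<sigma> q N y x \<phi>) = ennreal (?g x y)"
      unfolding dYXPhi_def by (rule ennreal_mult'[symmetric]) (simp add: prod_nonneg)
  qed
  also have "\<dots> = (\<Sum>x\<in>inputs N. \<integral>\<^sup>+ y. ennreal (?c x) * ennreal (?g x y) \<partial>?L)"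
    by (intro sum.cong refl nn_integral_cmult[symmetric] gm)
  also have "\<dots> = (\<integral>\<^sup>+ y. (\<Sum>x\<in>inputs N. ennreal (?c x) * ennreal (?g x y)) \<partial>?L)"
    by (rule nn_integral_sum[symmetric]) (use gm in simp)
  also have "\<dots> = (\<integral>\<^sup>+ y. ennreal (prPhi p N \<phi>) * ennreal (dY R0 R1 Rs \<sigma> q K p N y) \<partial>?L)"
  proof (rule nn_integral_cong)
    fix y
    have "(\<Sum>x\<in>inputs N. ennreal (?c x) * ennreal (?g x y)) = (\<Sum>x\<in>inputs N. ennreal (?c x * ?g x y))"
      by (intro sum.cong refl ennreal_mult[symmetric] c0 g0)
    also have "\<dots> = ennreal (\<Sum>x\<in>inputs N. ?c x * ?g x y)"
      by (rule sum_ennreal) (intro mult_nonneg_nonneg c0 g0)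
    also have "(\<Sum>x\<in>inputs N. ?c x * ?g x y) = prPhi p N \<phi> * dY R0 R1 Rs \<sigma> q K p N y *
        (\<Sum>x\<in>inputs N. prX q N x * dYXPhi R0 R1 Rs \<sigma> N y x \<phi> / dYXsfPhi R0 R1 Rs \<sigma> q N y x \<phi>)"
      by (simp add: sum_distrib_left divide_inverse algebra_simps)
    also have "\<dots> = prPhi p N \<phi> * dY R0 R1 Rs \<sigma> q K p N y"
      by (simp add: class_id[OF sig q0 q1 pnn psum])
    finally show "(\<Sum>x\<in>inputs N. ennreal (?c x) * ennreal (?g x y))
        = ennreal (prPhi p N \<phi>) * ennreal (dY R0 R1 Rs \<sigma> q K p N y)"
      by (simp add: ennreal_mult prPhi_nn[OF sig q0 q1 pnn psum ph] dY_nn[OF sig q0 q1 pnn psum])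
  qed
  also have "\<dots> = ennreal (prPhi p N \<phi>) * (\<integral>\<^sup>+ y. ennreal (dY R0 R1 Rs \<sigma> q K p N y) \<partial>?L)"
    by (rule nn_integral_cmult) (rule measurable_compose[OF m_dY[OF sig q0 q1 pnn psum] measurable_ennreal])
  also have "\<dots> = ennreal (prPhi p N \<phi>)" by (simp add: i_dY[OF sig q0 q1 pnn psum KN])
  finally show ?thesis .
qed

lemma sumJ:
  assumes KN: "K \<le> N^2"
  shows "(\<Sum>x\<in>inputs N. \<Sum>\<phi>\<in>patterns K N. ennreal (prX q N x * prPhi p N \<phi>) *
      (\<integral>\<^sup>+ y. ennreal (\<Prod>c\<in>grid N. normal_density (cellmean R0 R1 Rs \<phi> x c) \<sigma> (y c))
            * ennreal (dY R0 R1 Rs \<sigma> q K p N y / dYXsfPhi R0 R1 Rs \<sigma> q N y x \<phi>) \<partial>PiM (grid N) (\<lambda>_. lborel)))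
    = 1"
proof -
  have "(\<Sum>x\<in>inputs N. \<Sum>\<phi>\<in>patterns K N. ennreal (prX q N x * prPhi p N \<phi>) *
      (\<integral>\<^sup>+ y. ennreal (\<Prod>c\<in>grid N. normal_density (cellmean R0 R1 Rs \<phi> x c) \<sigma> (y c))
            * ennreal (dY R0 R1 Rs \<sigma> q K p N y / dYXsfPhi R0 R1 Rs \<sigma> q N y x \<phi>) \<partial>PiM (grid N) (\<lambda>_. lborel)))
    = (\<Sum>\<phi>\<in>patterns K N. \<Sum>x\<in>inputs N. ennreal (prX q N x * prPhi p N \<phi>) *
      (\<integral>\<^sup>+ y. ennreal (\<Prod>c\<in>grid N. normal_density (cellmean R0 R1 Rs \<phi> x c) \<sigma> (y c))
            * ennreal (dY R0 R1 Rs \<sigma> q K p N y / dYXsfPhi R0 R1 Rs \<sigma> q N y x \<phi>) \<partial>PiM (grid N) (\<lambda>_. lborel)))"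
    by (rule sum.swap)
  also have "\<dots> = (\<Sum>\<phi>\<in>patterns K N. ennreal (prPhi p N \<phi>))"
    by (intro sum.cong refl sumJ_phi KN)
  also have "\<dots> = ennreal (\<Sum>\<phi>\<in>patterns K N. prPhi p N \<phi>)"
    by (intro sum_ennreal prPhi_nn[OF sig q0 q1 pnn psum])
  also have "\<dots> = 1" by (simp add: sum_prPhi[OF pnn psum KN])
  finally show ?thesis .
qed

lemma part1_N:
  fixes \<epsilon> Lb :: real
  assumes N1: "1 \<le> N" and KN: "K \<le> N^2" and Lb: "0 < Lb"
    and lnLb: "- (\<epsilon> * real (N^2) / 2) < ln Lb"
    and lower: "\<And>x \<phi>. x \<in> inputs N \<Longrightarrow> \<phi> \<in> patterns K N \<Longrightarrow> 0 < prPhi p N \<phi> \<Longrightarrow>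
        Lb \<le> prPhi p N \<phi> * (\<Prod>c\<in>sfcells N \<phi>. bern q (x c))"
  shows "\<bar>chanprob R0 R1 Rs \<sigma> q K p N
            (\<lambda>x \<phi> y. \<bar>ln (dY R0 R1 Rs \<sigma> q K p N y / dYXsfPhi R0 R1 Rs \<sigma> q N y x \<phi>)\<bar>
                        / real (N^2) < \<epsilon> / 2) - 1\<bar> \<le> exp (- (\<epsilon> * real (N^2) / 2))"
proof -
  let ?T = "\<epsilon> * real (N^2) / 2"
  let ?Q = "noise \<sigma> N"
  let ?f = "\<lambda>x \<phi> y. \<bar>ln (dY R0 R1 Rs \<sigma> q K p N y / dYXsfPhi R0 R1 Rs \<sigma> q N y x \<phi>)\<bar> / real (N^2)"
  let ?G = "\<lambda>x \<phi>. {z \<in> space ?Q. ?f x \<phi> (\<lambda>c. cellmean R0 R1 Rs \<phi> x c + z c) < \<epsilon> / 2}"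
  have n0: "0 < real (N^2)" using N1 by simp
  have fm: "?f x \<phi> \<in> borel_measurable (PiM (grid N) (\<lambda>_. lborel))" for x \<phi>
    by (intro borel_measurable_divide borel_measurable_abs borel_measurable_ln
        m_dY[OF sig q0 q1 pnn psum] m_dsf[OF sig q0 q1 pnn psum] measurable_const) simp
  have fcong: "?f x \<phi> y = ?f x \<phi> y'" if "\<And>c. c \<in> grid N \<Longrightarrow> y c = y' c" for x \<phi> y y'
    using cong_dY[OF that] cong_dsf[OF that] by simp
  have trm: "ennreal (prX q N x * prPhi p N \<phi>) * emeasure ?Q (space ?Q - ?G x \<phi>)
      \<le> ennreal (prX q N x * prPhi p N \<phi>) * (ennreal (exp (- ?T)) * (\<integral>\<^sup>+ y. ennreal (\<Prod>c\<in>grid N. normal_density (cellmean R0 R1 Rs \<phi> x c) \<sigma> (y c))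
            * ennreal (dY R0 R1 Rs \<sigma> q K p N y / dYXsfPhi R0 R1 Rs \<sigma> q N y x \<phi>) \<partial>PiM (grid N) (\<lambda>_. lborel)))"
    if x: "x \<in> inputs N" and ph: "\<phi> \<in> patterns K N" for x \<phi>
  proof (cases "prPhi p N \<phi> = 0")
    case True then show ?thesis by simp
  next
    case False
    then have pp: "0 < prPhi p N \<phi>" using prPhi_nn[OF sig q0 q1 pnn psum ph] by simp
    have r_ge: "Lb \<le> dY R0 R1 Rs \<sigma> q K p N y / dYXsfPhi R0 R1 Rs \<sigma> q N y x \<phi>" for y
    proof -
      have d: "0 < dYXsfPhi R0 R1 Rs \<sigma> q N y x \<phi>" by (rule dsf_pos[OF sig q0 q1 pnn psum x])
      have "Lb \<le> prPhi p N \<phi> * (\<Prod>c\<in>sfcells N \<phi>. bern q (x c))" by (rule lower[OF x ph pp])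
      also have "\<dots> \<le> dY R0 R1 Rs \<sigma> q K p N y / dYXsfPhi R0 R1 Rs \<sigma> q N y x \<phi>"
        using dY_lower[OF sig q0 q1 pnn psum x ph, where y=y] d by (simp add: le_divide_eq)
      finally show ?thesis .
    qed
    have seteq: "space ?Q - ?G x \<phi> = {z \<in> space ?Q. \<not> ?f x \<phi> (\<lambda>c. cellmean R0 R1 Rs \<phi> x c + z c) < \<epsilon> / 2}"
      by blast
    have mk: "emeasure ?Q {z \<in> space ?Q. \<not> ?f x \<phi> (\<lambda>c. cellmean R0 R1 Rs \<phi> x c + z c) < \<epsilon> / 2} \<le> ennreal (exp (- ?T)) *
        (\<integral>\<^sup>+ y. ennreal (\<Prod>c\<in>grid N. normal_density (cellmean R0 R1 Rs \<phi> x c) \<sigma> (y c))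
            * ennreal (dY R0 R1 Rs \<sigma> q K p N y / dYXsfPhi R0 R1 Rs \<sigma> q N y x \<phi>) \<partial>PiM (grid N) (\<lambda>_. lborel))"
      unfolding noise_def
    proof (rule markov_pair[OF finite_grid sig, where E="\<lambda>y. ?f x \<phi> y < \<epsilon> / 2"
          and m="cellmean R0 R1 Rs \<phi> x" and r="\<lambda>y. dY R0 R1 Rs \<sigma> q K p N y / dYXsfPhi R0 R1 Rs \<sigma> q N y x \<phi>"])
      show "(\<lambda>y. dY R0 R1 Rs \<sigma> q K p N y / dYXsfPhi R0 R1 Rs \<sigma> q N y x \<phi>) \<in> borel_measurable (PiM (grid N) (\<lambda>_. lborel))"
        by (intro borel_measurable_divide m_dY[OF sig q0 q1 pnn psum] m_dsf[OF sig q0 q1 pnn psum])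
      show "(?f x \<phi> y < \<epsilon> / 2) = (?f x \<phi> y' < \<epsilon> / 2)" if "\<And>c. c \<in> grid N \<Longrightarrow> y c = y' c" for y y'
      proof -
        have "?f x \<phi> y = ?f x \<phi> y'" by (rule fcong) (rule that)
        then show ?thesis by (rule arg_cong[where f="\<lambda>v. v < \<epsilon> / 2"])
      qed
      show "exp ?T \<le> dY R0 R1 Rs \<sigma> q K p N y / dYXsfPhi R0 R1 Rs \<sigma> q N y x \<phi>" if "\<not> ?f x \<phi> y < \<epsilon> / 2" for y
        by (rule bad_from_lower[OF Lb _ r_ge that n0]) (use lnLb in auto)
    qed
    have "emeasure ?Q (space ?Q - ?G x \<phi>) \<le> ennreal (exp (- ?T)) *
        (\<integral>\<^sup>+ y. ennreal (\<Prod>c\<in>grid N. normal_density (cellmean R0 R1 Rs \<phi> x c) \<sigma> (y c))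
            * ennreal (dY R0 R1 Rs \<sigma> q K p N y / dYXsfPhi R0 R1 Rs \<sigma> q N y x \<phi>) \<partial>PiM (grid N) (\<lambda>_. lborel))"
      unfolding seteq by (rule mk)
    then show ?thesis by (rule mult_left_mono) simp
  qed
  have "\<bar>(\<Sum>x\<in>inputs N. \<Sum>\<phi>\<in>patterns K N. prX q N x * prPhi p N \<phi> * measure ?Q (?G x \<phi>)) - 1\<bar> \<le> exp (- ?T)"
  proof (rule assemble[OF noise_prob finite_inputs finite_patterns])
    show "0 \<le> prX q N x * prPhi p N \<phi>" if "x \<in> inputs N" "\<phi> \<in> patterns K N" for x \<phi>
      using that by (intro mult_nonneg_nonneg less_imp_le[OF prX_pos[OF sig q0 q1 pnn psum]] prPhi_nn[OF sig q0 q1 pnn psum])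
    show "(\<Sum>x\<in>inputs N. \<Sum>\<phi>\<in>patterns K N. prX q N x * prPhi p N \<phi>) = 1" by (rule weights[OF KN])
    show "?G x \<phi> \<in> sets ?Q" for x \<phi>
      unfolding noise_def by (rule event_meas[OF fm fcong])
    have "(\<Sum>x\<in>inputs N. \<Sum>\<phi>\<in>patterns K N. ennreal (prX q N x * prPhi p N \<phi>) * emeasure ?Q (space ?Q - ?G x \<phi>))
        \<le> (\<Sum>x\<in>inputs N. \<Sum>\<phi>\<in>patterns K N. ennreal (prX q N x * prPhi p N \<phi>) * (ennreal (exp (- ?T)) * (\<integral>\<^sup>+ y. ennreal (\<Prod>c\<in>grid N. normal_density (cellmean R0 R1 Rs \<phi> x c) \<sigma> (y c))
            * ennreal (dY R0 R1 Rs \<sigma> q K p N y / dYXsfPhi R0 R1 Rs \<sigma> q N y x \<phi>) \<partial>PiM (grid N) (\<lambda>_. lborel))))"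
      by (intro sum_mono trm)
    also have "\<dots> = ennreal (exp (- ?T)) * (\<Sum>x\<in>inputs N. \<Sum>\<phi>\<in>patterns K N. ennreal (prX q N x * prPhi p N \<phi>) * (\<integral>\<^sup>+ y. ennreal (\<Prod>c\<in>grid N. normal_density (cellmean R0 R1 Rs \<phi> x c) \<sigma> (y c))
            * ennreal (dY R0 R1 Rs \<sigma> q K p N y / dYXsfPhi R0 R1 Rs \<sigma> q N y x \<phi>) \<partial>PiM (grid N) (\<lambda>_. lborel)))"
      by (simp add: sum_distrib_left mult.left_commute)
    also have "\<dots> = ennreal (exp (- ?T))" by (simp add: sumJ[OF KN])
    finally show "(\<Sum>x\<in>inputs N. \<Sum>\<phi>\<in>patterns K N. ennreal (prX q N x * prPhi p N \<phi>) * emeasure ?Q (space ?Q - ?G x \<phi>))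
        \<le> ennreal (exp (- ?T))" .
  qed simp
  then show ?thesis unfolding chanprob_def by simp
qed


end

lemma card_sf:
  assumes ph: "\<phi> \<in> patterns K N"
  shows "card (sfcells N \<phi>) \<le> 2 * K * N"
proof -
  have fin: "finite \<phi>" using ph by (auto simp: patterns_def intro: finite_subset[OF _ finite_grid])
  have cK: "card \<phi> \<le> K" using ph by (simp add: patterns_def)
  let ?U = "\<Union>ij\<in>\<phi>. ({fst ij} \<times> {1..N}) \<union> ({1..N} \<times> {snd ij})"
  have sub: "sfcells N \<phi> \<subseteq> ?U" by (auto simp: sfcells_def grid_def)
  have "card (sfcells N \<phi>) \<le> card ?U" by (rule card_mono[OF _ sub]) (use fin in auto)
  also have "\<dots> \<le> (\<Sum>ij\<in>\<phi>. card (({fst ij} \<times> {1..N}) \<union> ({1..N} \<times> {snd ij})))"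
    by (rule card_UN_le[OF fin])
  also have "\<dots> \<le> (\<Sum>ij\<in>\<phi>. 2 * N)"
  proof (rule sum_mono)
    fix ij
    have "card (({fst ij} \<times> {1..N}) \<union> ({1..N} \<times> {snd ij})) \<le> card ({fst ij} \<times> {1..N}) + card ({1..N} \<times> {snd ij})"
      by (rule card_Un_le)
    also have "\<dots> = 2 * N" by (simp add: card_cartesian_product)
    finally show "card (({fst ij} \<times> {1..N}) \<union> ({1..N} \<times> {snd ij})) \<le> 2 * N" .
  qed
  also have "\<dots> = 2 * N * card \<phi>" by simp
  also have "\<dots> \<le> 2 * N * K" using cK by simp
  finally show ?thesis by (simp add: mult.commute mult.left_commute)
qed

lemma A_lower:
  assumes q0: "0 < q" and q1: "q < 1" and ph: "\<phi> \<in> patterns K N"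
  shows "min q (1 - q) ^ (2 * K * N) \<le> (\<Prod>c\<in>sfcells N \<phi>. bern q (x c))"
proof -
  have "min q (1 - q) ^ (2 * K * N) \<le> min q (1 - q) ^ card (sfcells N \<phi>)"
    by (rule power_decreasing[OF card_sf[OF ph]]) (use q0 q1 in auto)
  also have "\<dots> = (\<Prod>c\<in>sfcells N \<phi>. min q (1 - q))" by simp
  also have "\<dots> \<le> (\<Prod>c\<in>sfcells N \<phi>. bern q (x c))"
    by (rule prod_mono) (use q0 q1 in \<open>auto simp: bern_def\<close>)
  finally show ?thesis .
qed

lemma prPhi_lower:
  assumes N1: "1 \<le> N" and ph: "\<phi> \<in> patterns K N" and pos: "0 < prPhi p N \<phi>"
    and pm: "\<And>k. k \<le> K \<Longrightarrow> 0 < p k \<Longrightarrow> pm \<le> p k"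
  shows "pm / real (N^2) ^ K \<le> prPhi p N \<phi>"
proof -
  let ?k = "card \<phi>"
  have kK: "?k \<le> K" using ph by (simp add: patterns_def)
  have "?k \<le> card (grid N)" using ph by (auto simp: patterns_def intro: card_mono)
  then have kN: "?k \<le> N^2" by (simp add: card_grid)
  have C0: "0 < real (N^2 choose ?k)" using kN by simp
  have pk: "0 < p ?k" using pos C0 by (simp add: prPhi_def zero_less_divide_iff)
  have N2: "1 \<le> real (N^2)" using N1 by simp
  have "real (N^2 choose ?k) \<le> real ((N^2) ^ ?k)" by (rule of_nat_mono[OF binomial_le_pow[OF kN]])
  also have "\<dots> = real (N^2) ^ ?k" by simp
  also have "\<dots> \<le> real (N^2) ^ K" by (rule power_increasing[OF kK N2])
  finally have Cle: "real (N^2 choose ?k) \<le> real (N^2) ^ K" .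
  have "pm / real (N^2) ^ K \<le> p ?k / real (N^2) ^ K"
    by (rule divide_right_mono[OF pm[OF kK pk]]) simp
  also have "\<dots> \<le> p ?k / real (N^2 choose ?k)"
  proof (rule divide_left_mono[OF Cle])
    show "0 \<le> p ?k" using pk by simp
    have n2: "0 < real (N^2)" using N1 by simp
    have "0 < real (N^2) ^ K" using n2 by (rule zero_less_power)
    then show "0 < real (N^2) ^ K * real (N^2 choose ?k)" using C0 by (rule mult_pos_pos)
  qed
  finally show ?thesis by (simp add: prPhi_def)
qed

lemma asym:
  fixes pm qm \<epsilon> :: real and K :: nat
  assumes pm: "0 < pm" and qm0: "0 < qm" and qm1: "qm \<le> 1" and e: "0 < \<epsilon>"
  shows "\<exists>N0. \<forall>N\<ge>N0. 1 \<le> N \<and> K \<le> N^2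
     \<and> - (\<epsilon> * real (N^2) / 2) < ln (pm * qm ^ (2 * K * N) / real (N^2) ^ K)
     \<and> exp (- (\<epsilon> * real (N^2) / 2)) \<le> (2 / \<epsilon>) / real N"
proof -
  define a where "a = \<bar>ln pm\<bar>"
  define C where "C = 2 * real K * (1 - ln qm)"
  have a0: "0 \<le> a" by (simp add: a_def)
  have lq: "ln qm \<le> 0" using qm0 qm1 by simp
  have C0: "0 \<le> C" using lq by (simp add: C_def)
  obtain n :: nat where n: "real n \<ge> 2 * (a + C + 1) / \<epsilon>"
    using real_arch_simple[of "2 * (a + C + 1) / \<epsilon>"] by (elim exE) (rule that)
  define N0 where "N0 = max n (K + 1)"
  show ?thesis
  proof (intro exI allI impI conjI)
    fix N assume NN: "N0 \<le> N"
    have nN: "n \<le> N" "K + 1 \<le> N" using NN by (auto simp: N0_def)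
    then show N1: "1 \<le> N" by simp
    have "K \<le> N" using nN by simp
    also have "N \<le> N^2" by (simp add: power2_eq_square)
    finally show "K \<le> N^2" .
    have rN: "1 \<le> real N" using N1 by simp
    have "real n \<le> real N" using nN by simp
    then have big: "2 * (a + C + 1) / \<epsilon> \<le> real N" using n by linarith
    then have "2 * (a + C + 1) \<le> real N * \<epsilon>" using e by (simp add: pos_divide_le_eq)
    then have big2: "a + C + 1 \<le> \<epsilon> * real N / 2" by (simp add: algebra_simps)
    have lnN: "ln (real N) \<le> real N" using ln_le_minus_one[of "real N"] rN by simp
    have p1: "0 < pm * qm ^ (2 * K * N)" using pm qm0 by simp
    have p2: "0 < real (N^2) ^ K" using rN by simp
    have e1: "ln (pm * qm ^ (2 * K * N) / real (N^2) ^ K) = ln (pm * qm ^ (2 * K * N)) - ln (real (N^2) ^ K)"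
    proof -
      have nz: "pm * qm ^ (2 * K * N) \<noteq> 0" "real (N^2) ^ K \<noteq> 0" using p1 p2 by linarith+
      show ?thesis by (simp only: ln_div nz simp_thms if_True)
    qed
    have e2: "ln (pm * qm ^ (2 * K * N)) = ln pm + real (2 * K * N) * ln qm"
    proof -
      have "ln (pm * qm ^ (2 * K * N)) = ln pm + ln (qm ^ (2 * K * N))"
        by (rule ln_mult_pos) (use pm qm0 in auto)
      also have "ln (qm ^ (2 * K * N)) = real (2 * K * N) * ln qm" by (rule ln_realpow)
      finally show ?thesis .
    qed
    have rN0: "0 < real N" using rN by linarith
    have e3: "ln (real (N^2) ^ K) = real K * (2 * ln (real N))"
    proof -
      have "real (N^2) = real N ^ 2" by simp
      then have "ln (real (N^2)) = 2 * ln (real N)" using ln_realpow[of "real N" 2] by simp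
      moreover have "ln (real (N^2) ^ K) = real K * ln (real (N^2))"
        by (rule ln_realpow)
      ultimately show ?thesis by simp
    qed
    have t1: "- a \<le> ln pm" by (simp add: a_def)
    have t2: "real K * (2 * ln (real N)) \<le> 2 * real K * real N"
    proof -
      have "real K * (2 * ln (real N)) \<le> real K * (2 * real N)"
        using lnN by (intro mult_left_mono) auto
      then show ?thesis by (simp add: mult.assoc mult.left_commute)
    qed
    have t3: "real (2 * K * N) * ln qm = 2 * real K * ln qm * real N" by (simp add: mult.commute mult.left_commute)
    have t4: "C * real N = 2 * real K * real N - 2 * real K * ln qm * real N"
      by (simp add: C_def left_diff_distrib right_diff_distrib mult.commute mult.left_commute)
    have l1: "- a - C * real N \<le> ln (pm * qm ^ (2 * K * N) / real (N^2) ^ K)"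
      unfolding e1 e2 e3 using t1 t2 t3 t4 by linarith
    have "a \<le> a * real N" using mult_left_mono[OF rN a0] by simp
    moreover have "(a + C + 1) * real N = a * real N + C * real N + real N" by (simp add: distrib_right)
    ultimately have "a + C * real N < (a + C + 1) * real N" using rN by linarith
    also have "\<dots> \<le> \<epsilon> * real N / 2 * real N" using big2 rN by (intro mult_right_mono) auto
    also have "\<dots> = \<epsilon> * real (N^2) / 2" by (simp add: power2_eq_square)
    finally show "- (\<epsilon> * real (N^2) / 2) < ln (pm * qm ^ (2 * K * N) / real (N^2) ^ K)"
      using l1 by linarith
    have x1: "1 + \<epsilon> * real (N^2) / 2 \<le> exp (\<epsilon> * real (N^2) / 2)" by (rule exp_ge_add_one_self)
    have x2: "\<epsilon> * real N / 2 \<le> \<epsilon> * real (N^2) / 2"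
      using e rN by (simp add: power2_eq_square)
    have x3: "\<epsilon> * real N / 2 \<le> exp (\<epsilon> * real (N^2) / 2)" using x1 x2 by linarith
    have x4: "0 < \<epsilon> * real N / 2" using e rN by simp
    have "inverse (exp (\<epsilon> * real (N^2) / 2)) \<le> inverse (\<epsilon> * real N / 2)"
      by (rule le_imp_inverse_le[OF x3 x4])
    then show "exp (- (\<epsilon> * real (N^2) / 2)) \<le> (2 / \<epsilon>) / real N"
      by (simp add: exp_minus)
  qed
qed

theorem lemma1:
  fixes R0 R1 Rs \<sigma> q \<epsilon> :: real and K :: nat and p :: "nat \<Rightarrow> real"
  assumes "0 < R1" and "R1 < R0" and "0 < Rs" and "0 < \<sigma>"
    and "0 < q" and "q < 1"
    and "\<forall>k\<le>K. 0 \<le> p k" and "(\<Sum>k\<le>K. p k) = 1"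
    and "0 < \<epsilon>"
  shows "((\<lambda>N. chanprob R0 R1 Rs \<sigma> q K p N
            (\<lambda>x \<phi> y. \<bar>ln (dY R0 R1 Rs \<sigma> q K p N y / dYXsfPhi R0 R1 Rs \<sigma> q N y x \<phi>)\<bar>
                        / real (N^2) < \<epsilon> / 2))
           \<longlonglongrightarrow> 1)
      \<and> ((\<lambda>N. chanprob R0 R1 Rs \<sigma> q K p N
            (\<lambda>x \<phi> y. \<bar>ln (dYX R0 R1 Rs \<sigma> K p N y x / dYXPhi R0 R1 Rs \<sigma> N y x \<phi>)\<bar>
                        / real (N^2) < \<epsilon> / 2))
           \<longlonglongrightarrow> 1)"
proof -
  have sig: "0 < \<sigma>" and q0: "0 < q" and q1: "q < 1" and pnn: "\<forall>k\<le>K. 0 \<le> p k"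
    and psum: "(\<Sum>k\<le>K. p k) = 1" and e: "0 < \<epsilon>" using assms by auto
  define S where "S = {k. k \<le> K \<and> 0 < p k}"
  have finS: "finite S" unfolding S_def by (rule finite_subset[of _ "{..K}"]) auto
  have neS: "S \<noteq> {}"
  proof
    assume "S = {}"
    then have "\<forall>k\<in>{..K}. p k = 0" using pnn by (force simp: S_def)
    then have "(\<Sum>k\<le>K. p k) = 0" by simp
    then show False using psum by simp
  qed
  define pm where "pm = Min (p ` S)"
  have pm_pos: "0 < pm"
  proof -
    have "pm \<in> p ` S" unfolding pm_def by (rule Min_in) (use finS neS in auto)
    then show ?thesis by (auto simp: S_def)
  qed
  have pm_le: "pm \<le> p k" if "k \<le> K" "0 < p k" for k
    unfolding pm_def by (rule Min_le) (use finS that in \<open>auto simp: S_def\<close>)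
  define qm where "qm = min q (1 - q)"
  have qm0: "0 < qm" and qm1: "qm \<le> 1" using q0 q1 by (auto simp: qm_def)
  obtain N0 where N0: "\<And>N. N \<ge> N0 \<Longrightarrow> 1 \<le> N \<and> K \<le> N^2
     \<and> - (\<epsilon> * real (N^2) / 2) < ln (pm * qm ^ (2 * K * N) / real (N^2) ^ K)
     \<and> exp (- (\<epsilon> * real (N^2) / 2)) \<le> (2 / \<epsilon>) / real N"
    using asym[OF pm_pos qm0 qm1 e, of K] by blast
  have key: "\<bar>chanprob R0 R1 Rs \<sigma> q K p N
            (\<lambda>x \<phi> y. \<bar>ln (dY R0 R1 Rs \<sigma> q K p N y / dYXsfPhi R0 R1 Rs \<sigma> q N y x \<phi>)\<bar>
                        / real (N^2) < \<epsilon> / 2) - 1\<bar> \<le> (2 / \<epsilon>) / real N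
      \<and> \<bar>chanprob R0 R1 Rs \<sigma> q K p N
            (\<lambda>x \<phi> y. \<bar>ln (dYX R0 R1 Rs \<sigma> K p N y x / dYXPhi R0 R1 Rs \<sigma> N y x \<phi>)\<bar>
                        / real (N^2) < \<epsilon> / 2) - 1\<bar> \<le> (2 / \<epsilon>) / real N"
    if NN: "N \<ge> N0" for N
  proof -
    note NF = N0[OF NN]
    have N1: "1 \<le> N" and KN: "K \<le> N^2" using NF by auto
    have lnLb: "- (\<epsilon> * real (N^2) / 2) < ln (pm * qm ^ (2 * K * N) / real (N^2) ^ K)" using NF by auto
    have ex: "exp (- (\<epsilon> * real (N^2) / 2)) \<le> (2 / \<epsilon>) / real N" using NF by auto
    have D0: "0 < real (N^2) ^ K" using N1 by simp
    have qp0: "0 \<le> qm ^ (2 * K * N)" and qp1: "qm ^ (2 * K * N) \<le> 1"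
      using qm0 qm1 by (auto intro: power_le_one)
    have Lb: "0 < pm * qm ^ (2 * K * N) / real (N^2) ^ K" using pm_pos qm0 D0 by simp
    have Leq: "pm * qm ^ (2 * K * N) / real (N^2) ^ K = (pm / real (N^2) ^ K) * qm ^ (2 * K * N)" by simp
    have pmD: "0 \<le> pm / real (N^2) ^ K" using pm_pos D0 by simp
    have low2: "pm * qm ^ (2 * K * N) / real (N^2) ^ K \<le> prPhi p N \<phi>"
      if ph: "\<phi> \<in> patterns K N" and pp: "0 < prPhi p N \<phi>" for \<phi>
    proof -
      have "pm * qm ^ (2 * K * N) / real (N^2) ^ K \<le> pm / real (N^2) ^ K"
        unfolding Leq using mult_left_mono[OF qp1 pmD] by simp
      also have "\<dots> \<le> prPhi p N \<phi>" by (rule prPhi_lower[OF N1 ph pp pm_le])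
      finally show ?thesis .
    qed
    have low1: "pm * qm ^ (2 * K * N) / real (N^2) ^ K \<le> prPhi p N \<phi> * (\<Prod>c\<in>sfcells N \<phi>. bern q (x c))"
      if x: "x \<in> inputs N" and ph: "\<phi> \<in> patterns K N" and pp: "0 < prPhi p N \<phi>" for x \<phi>
    proof -
      have "qm ^ (2 * K * N) \<le> (\<Prod>c\<in>sfcells N \<phi>. bern q (x c))"
        unfolding qm_def by (rule A_lower[OF q0 q1 ph])
      moreover have "pm / real (N^2) ^ K \<le> prPhi p N \<phi>" by (rule prPhi_lower[OF N1 ph pp pm_le])
      ultimately show ?thesis unfolding Leq
        by (intro mult_mono pmD qp0) (use pp in auto)
    qed
    have r1: "\<bar>chanprob R0 R1 Rs \<sigma> q K p N
            (\<lambda>x \<phi> y. \<bar>ln (dY R0 R1 Rs \<sigma> q K p N y / dYXsfPhi R0 R1 Rs \<sigma> q N y x \<phi>)\<bar>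
                        / real (N^2) < \<epsilon> / 2) - 1\<bar> \<le> exp (- (\<epsilon> * real (N^2) / 2))"
      by (rule part1_N[OF sig q0 q1 pnn psum N1 KN Lb lnLb low1])
    have r2: "\<bar>chanprob R0 R1 Rs \<sigma> q K p N
            (\<lambda>x \<phi> y. \<bar>ln (dYX R0 R1 Rs \<sigma> K p N y x / dYXPhi R0 R1 Rs \<sigma> N y x \<phi>)\<bar>
                        / real (N^2) < \<epsilon> / 2) - 1\<bar> \<le> exp (- (\<epsilon> * real (N^2) / 2))"
      by (rule part2_N[OF sig q0 q1 pnn psum N1 KN Lb lnLb low2])
    show ?thesis using r1 r2 ex by linarith
  qed
  have lim0: "(\<lambda>N. (2 / \<epsilon>) / real N) \<longlonglongrightarrow> 0" by (rule lim_const_over_n)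
  show ?thesis
  proof
    show "(\<lambda>N. chanprob R0 R1 Rs \<sigma> q K p N
            (\<lambda>x \<phi> y. \<bar>ln (dY R0 R1 Rs \<sigma> q K p N y / dYXsfPhi R0 R1 Rs \<sigma> q N y x \<phi>)\<bar>
                        / real (N^2) < \<epsilon> / 2)) \<longlonglongrightarrow> 1"
    proof (rule LIM_zero_cancel, rule Lim_null_comparison[OF _ lim0])
      show "\<forall>\<^sub>F N in sequentially. norm (chanprob R0 R1 Rs \<sigma> q K p N
            (\<lambda>x \<phi> y. \<bar>ln (dY R0 R1 Rs \<sigma> q K p N y / dYXsfPhi R0 R1 Rs \<sigma> q N y x \<phi>)\<bar>
                        / real (N^2) < \<epsilon> / 2) - 1) \<le> (2 / \<epsilon>) / real N"
        unfolding eventually_sequentially using key by auto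
    qed
    show "(\<lambda>N. chanprob R0 R1 Rs \<sigma> q K p N
            (\<lambda>x \<phi> y. \<bar>ln (dYX R0 R1 Rs \<sigma> K p N y x / dYXPhi R0 R1 Rs \<sigma> N y x \<phi>)\<bar>
                        / real (N^2) < \<epsilon> / 2)) \<longlonglongrightarrow> 1"
    proof (rule LIM_zero_cancel, rule Lim_null_comparison[OF _ lim0])
      show "\<forall>\<^sub>F N in sequentially. norm (chanprob R0 R1 Rs \<sigma> q K p N
            (\<lambda>x \<phi> y. \<bar>ln (dYX R0 R1 Rs \<sigma> K p N y x / dYXPhi R0 R1 Rs \<sigma> N y x \<phi>)\<bar>
                        / real (N^2) < \<epsilon> / 2) - 1) \<le> (2 / \<epsilon>) / real N"
        unfolding eventually_sequentially using key by auto
    qed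
  qed
qed

end
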